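(* Let $\mathcal{S}$ be a relational schema, $\mathit{IC}$ a finite set of universal integrity constraints, $D$ a database instance (without nulls), and $\mathcal{Q}(\bar x)$ a query given by a non-recursive normal Datalog$^{\mathit{not}}$ program $\Pi^{\mathcal{Q}}$ whose extensional predicates are the $P_{\star\star}$ ($P\in\mathcal{S}$) and built-ins, and whose answer predicate $\mathit{Ans}^{\mathcal{Q}}$ occurs only in rule heads. Let $\Pi^r$ be the repair program $\Pi(\mathit{IC},D)$ without the database facts, and $\Pi=D\cup\Pi^r\cup\Pi^{\mathcal{Q}}$. Then for every tuple of constants $\bar a$: $$D\models_c\mathcal{Q}(\bar a)\iff\{\mathcal{R}(D),\Phi(\Pi^r),\Phi(\Pi^{\mathcal{Q}})\}\models\mathit{Ans}^{\mathcal{Q}}(\bar a),$$ where $\Phi(\Pi^r)$ is the SO sentence specifying the repairs for fixed extensional predicates $P\in\mathcal{S}$, and $\Phi(\Pi^{\mathcal{Q}})$ is the SO sentence specifying the models of the query program for fixed predicates $P_{\star\star}$.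
   Context: A repair of $D$ w.r.t. $\mathit{IC}$ is an instance $D'$ over $\mathcal{S}$ with $D'\models\mathit{IC}$ such that the symmetric difference $\Delta(D,D')$ is minimal under set inclusion among such instances. $\bar a$ is a consistent answer, written $D\models_c\mathcal{Q}(\bar a)$, iff $D'\models\mathcal{Q}(\bar a)$ for every repair $D'$ of $D$ (for a Datalog query: $\bar a$ is an answer to the query program using $D'$ as extensional database). Repair program: for each $P\in\mathcal{S}$ new predicates $P_{\mathbf{t}},P_{\mathbf{f}},P_\star,P_{\star\star}$; rules: facts $P(\bar a)$ for $P(\bar a)\in D$; for each constraint $\forall \bar{x}(\bigwedge_{i=1}^{m} P_i(\bar{x}_i) \rightarrow \bigvee_{j=1}^{n} Q_j(\bar{y}_j) \vee \varphi)$ and each partition $Q'\cup Q''$ of $\{Q_1,\ldots,Q_n\}$ the rule $\bigvee_{i} P_{i,\mathbf{f}}(\bar{x}_i)\vee\bigvee_{j} Q_{j,\mathbf{t}}(\bar y_j)\leftarrow \bigwedge_{i} P_{i,\star}(\bar x_i), \bigwedge_{Q_j\in Q'}Q_{j,\mathbf{f}}(\bar y_j), \bigwedge_{Q_k\in Q''}\mathit{not}\,Q_k(\bar y_k), \bar\varphi$ ($\bar\varphi$ built-ins equivalent to $\neg\varphi$); $P_\star(\bar x)\leftarrow P(\bar x)$; $P_\star(\bar x)\leftarrow P_{\mathbf{t}}(\bar x)$; $P_{\star\star}(\bar x)\leftarrow P_\star(\bar x),\mathit{not}\,P_{\mathbf{f}}(\bar x)$; program constraints $\leftarrow P_{\mathbf{t}}(\bar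 x),P_{\mathbf{f}}(\bar x)$. For a program $\Pi_0$, $\psi(\Pi_0)$ is the conjunction of universal closures of $\mathit{Body}\rightarrow\mathit{Head}$ (commas as $\wedge$, $\mathit{not}$ as $\neg$, constraints $\leftarrow B$ as $\neg B$). Given a set $\bar P$ of predicates to be minimized, $\Phi:=\psi\wedge\neg\exists\bar X((\bar X<\bar P)\wedge\psi^\circ(\bar X))$, where $\bar X$ are predicate variables for $\bar P$, $\bar X<\bar P$ means componentwise inclusion with at least one strict, and $\psi^\circ$ replaces each $P_i\in\bar P$ by $X^{P_i}$ recursively with $(F\rightarrow G)^\circ=(F^\circ\rightarrow G^\circ)\wedge(F\rightarrow G)$, negation written as $\chi\rightarrow\bot$, other connectives, quantifiers, built-ins, $\bot$ and non-minimized predicates unchanged. $\Phi(\Pi^r)$ is this sentence for $\Pi^r$ with $\bar P$ the predicates $P_{\mathbf{t}},P_{\mathbf{f}},P_\star,P_{\star\star}$; $\Phi(\Pi^{\mathcal Q})$ is this sentence for $\Pi^{\mathcal Q}$ with $\bar P$ the predicates defined in $\Pi^{\mathcal Q}$ (not the $P_{\star\star}$). $\mathcal{R}(D)$ is the conjunction of the domain closure axiom over the constants, unique names axioms, and for each $P\in\mathcal{S}$ the completion $\forall\bar x(P(\bar x)\equiv\bigvee_{P(\bar a)\in D}\bar x=\bar a)$. *)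

theory Defs
  imports Main
begin

datatype 'c trm = V nat | Cn 'c

text \<open>Predicate names: for each schema relation P the predicates P, P_t, P_f, P_star, P_starstar;
  and the (disjoint) predicates of the query program.\<close>
datatype ('r,'q) pn = Ext 'r | Tr 'r | Fa 'r | St 'r | SS 'r | Qp 'q

type_synonym ('p,'c) atom = "'p \<times> 'c trm list"
text \<open>A built-in literal (polarity, built-in symbol, arguments).\<close>
type_synonym ('b,'c) blit = "bool \<times> 'b \<times> 'c trm list"

text \<open>Universal IC  forall x. (P_1(x_1) & ... & P_m(x_m) --> Q_1(y_1) | ... | Q_n(y_n) | phi),
  phi a disjunction of built-in literals.\<close>
datatype ('r,'c,'b) ic = IC "('r,'c) atom list" "('r,'c) atom list" "('b,'c) blit list"

text \<open>Disjunctive rule  head <- pos, not neg, built-ins  (empty head = program constraint).\<close>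
datatype ('p,'c,'b) rule = Rule (rhead: "('p,'c) atom list") (rpos: "('p,'c) atom list")
  (rneg: "('p,'c) atom list") (rbis: "('b,'c) blit list")

fun tev :: "('c \<Rightarrow> 'd) \<Rightarrow> (nat \<Rightarrow> 'd) \<Rightarrow> 'c trm \<Rightarrow> 'd" where
  "tev k \<sigma> (V n) = \<sigma> n"
| "tev k \<sigma> (Cn c) = k c"

fun trm_vars :: "'c trm \<Rightarrow> nat set" where
  "trm_vars (V n) = {n}" | "trm_vars (Cn c) = {}"
fun trm_consts :: "'c trm \<Rightarrow> 'c set" where
  "trm_consts (V n) = {}" | "trm_consts (Cn c) = {c}"

definition atom_vars :: "('p,'c) atom \<Rightarrow> nat set" where
  "atom_vars a = \<Union> (trm_vars ` set (snd a))"
definition atom_consts :: "('p,'c) atom \<Rightarrow> 'c set" where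
  "atom_consts a = \<Union> (trm_consts ` set (snd a))"
definition blit_vars :: "('b,'c) blit \<Rightarrow> nat set" where
  "blit_vars l = \<Union> (trm_vars ` set (snd (snd l)))"
definition blit_consts :: "('b,'c) blit \<Rightarrow> 'c set" where
  "blit_consts l = \<Union> (trm_consts ` set (snd (snd l)))"

definition rule_atoms :: "('p,'c,'b) rule \<Rightarrow> ('p,'c) atom set" where
  "rule_atoms r = set (rhead r) \<union> set (rpos r) \<union> set (rneg r)"
definition rule_vars :: "('p,'c,'b) rule \<Rightarrow> nat set" where
  "rule_vars r = \<Union> (atom_vars ` rule_atoms r) \<union> \<Union> (blit_vars ` set (rbis r))"
definition rule_consts :: "('p,'c,'b) rule \<Rightarrow> 'c set" where
  "rule_consts r = \<Union> (atom_consts ` rule_atoms r) \<union> \<Union> (blit_consts ` set (rbis r))"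

fun pn_arity :: "('r \<Rightarrow> nat) \<Rightarrow> ('q \<Rightarrow> nat) \<Rightarrow> ('r,'q) pn \<Rightarrow> nat" where
  "pn_arity ar arq (Ext r) = ar r"
| "pn_arity ar arq (Tr r) = ar r"
| "pn_arity ar arq (Fa r) = ar r"
| "pn_arity ar arq (St r) = ar r"
| "pn_arity ar arq (SS r) = ar r"
| "pn_arity ar arq (Qp q) = arq q"

text \<open>The database domain is the (finite, nonempty) set of constants cs of the language.\<close>
definition instance_over :: "'r list \<Rightarrow> ('r \<Rightarrow> nat) \<Rightarrow> 'c list \<Rightarrow> ('r \<times> 'c list) set \<Rightarrow> bool" where
  "instance_over Sch ar cs I \<longleftrightarrow>
     (\<forall>(P,t)\<in>I. P \<in> set Sch \<and> length t = ar P \<and> set t \<subseteq> set cs)"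

fun ic_sat :: "'c list \<Rightarrow> ('b \<Rightarrow> 'c list \<Rightarrow> bool) \<Rightarrow> ('r \<times> 'c list) set \<Rightarrow> ('r,'c,'b) ic \<Rightarrow> bool" where
  "ic_sat cs bi I (IC B H ph) \<longleftrightarrow>
     (\<forall>\<sigma>. range \<sigma> \<subseteq> set cs \<longrightarrow>
        (\<forall>(P,ts)\<in>set B. (P, map (tev id \<sigma>) ts) \<in> I) \<longrightarrow>
        (\<exists>(Q,ts)\<in>set H. (Q, map (tev id \<sigma>) ts) \<in> I) \<or>
        (\<exists>(pl,b,ts)\<in>set ph. bi b (map (tev id \<sigma>) ts) = pl))"

definition satisfies_ics :: "'c list \<Rightarrow> ('b \<Rightarrow> 'c list \<Rightarrow> bool) \<Rightarrow> ('r,'c,'b) ic list \<Rightarrow> ('r \<times> 'c list) set \<Rightarrow> bool" where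
  "satisfies_ics cs bi ics I \<longleftrightarrow> (\<forall>ic\<in>set ics. ic_sat cs bi I ic)"

definition symdiff :: "'a set \<Rightarrow> 'a set \<Rightarrow> 'a set" where
  "symdiff A B = (A - B) \<union> (B - A)"

definition is_repair :: "'r list \<Rightarrow> ('r \<Rightarrow> nat) \<Rightarrow> 'c list \<Rightarrow> ('b \<Rightarrow> 'c list \<Rightarrow> bool) \<Rightarrow>
    ('r,'c,'b) ic list \<Rightarrow> ('r \<times> 'c list) set \<Rightarrow> ('r \<times> 'c list) set \<Rightarrow> bool" where
  "is_repair Sch ar cs bi ics D D' \<longleftrightarrow>
     instance_over Sch ar cs D' \<and> satisfies_ics cs bi ics D' \<and>
     \<not> (\<exists>D''. instance_over Sch ar cs D'' \<and> satisfies_ics cs bi ics D'' \<and>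
              symdiff D D'' \<subset> symdiff D D')"

definition gatom :: "(nat \<Rightarrow> 'c) \<Rightarrow> ('p,'c) atom \<Rightarrow> 'p \<times> 'c list" where
  "gatom \<sigma> a = (fst a, map (tev id \<sigma>) (snd a))"

definition bis_true :: "('b \<Rightarrow> 'c list \<Rightarrow> bool) \<Rightarrow> (nat \<Rightarrow> 'c) \<Rightarrow> ('b,'c) blit list \<Rightarrow> bool" where
  "bis_true bi \<sigma> bl \<longleftrightarrow> (\<forall>(pl,b,ts)\<in>set bl. bi b (map (tev id \<sigma>) ts) = pl)"

text \<open>N is a model of the Gelfond-Lifschitz reduct of the program w.r.t. M.\<close>
definition reduct_model :: "'c list \<Rightarrow> ('b \<Rightarrow> 'c list \<Rightarrow> bool) \<Rightarrow> ('p,'c,'b) rule list \<Rightarrow>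
    ('p \<times> 'c list) set \<Rightarrow> ('p \<times> 'c list) set \<Rightarrow> bool" where
  "reduct_model cs bi Pr M N \<longleftrightarrow>
     (\<forall>r\<in>set Pr. \<forall>\<sigma>. range \<sigma> \<subseteq> set cs \<longrightarrow>
        (\<forall>a\<in>set (rpos r). gatom \<sigma> a \<in> N) \<longrightarrow>
        (\<forall>a\<in>set (rneg r). gatom \<sigma> a \<notin> M) \<longrightarrow>
        bis_true bi \<sigma> (rbis r) \<longrightarrow>
        (\<exists>a\<in>set (rhead r). gatom \<sigma> a \<in> N))"

definition stable_model :: "'c list \<Rightarrow> ('b \<Rightarrow> 'c list \<Rightarrow> bool) \<Rightarrow> ('p,'c,'b) rule list \<Rightarrow>
    ('p \<times> 'c list) set \<Rightarrow> ('p \<times> 'c list) set \<Rightarrow> bool" where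
  "stable_model cs bi Pr E M \<longleftrightarrow>
     E \<subseteq> M \<and> reduct_model cs bi Pr M M \<and>
     \<not> (\<exists>N. N \<subset> M \<and> E \<subseteq> N \<and> reduct_model cs bi Pr M N)"

definition query_answer :: "'c list \<Rightarrow> ('b \<Rightarrow> 'c list \<Rightarrow> bool) \<Rightarrow> (('r,'q) pn,'c,'b) rule list \<Rightarrow>
    'q \<Rightarrow> ('r \<times> 'c list) set \<Rightarrow> 'c list \<Rightarrow> bool" where
  "query_answer cs bi PQ ans D' a \<longleftrightarrow>
     (\<forall>M. stable_model cs bi PQ {(SS P, t) | P t. (P, t) \<in> D'} M \<longrightarrow> (Qp ans, a) \<in> M)"

definition cons_answer :: "'r list \<Rightarrow> ('r \<Rightarrow> nat) \<Rightarrow> 'c list \<Rightarrow> ('b \<Rightarrow> 'c list \<Rightarrow> bool) \<Rightarrow>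
    ('r,'c,'b) ic list \<Rightarrow> ('r \<times> 'c list) list \<Rightarrow> (('r,'q) pn,'c,'b) rule list \<Rightarrow> 'q \<Rightarrow> 'c list \<Rightarrow> bool" where
  "cons_answer Sch ar cs bi ics D PQ ans a \<longleftrightarrow>
     (\<forall>D'. is_repair Sch ar cs bi ics (set D) D' \<longrightarrow> query_answer cs bi PQ ans D' a)"

definition mapp :: "('p \<Rightarrow> 'p2) \<Rightarrow> ('p,'c) atom \<Rightarrow> ('p2,'c) atom" where
  "mapp f a = (f (fst a), snd a)"

fun ic_rules :: "('r,'c,'b) ic \<Rightarrow> (('r,'q) pn,'c,'b) rule list" where
  "ic_rules (IC B H ph) =
     map (\<lambda>J. Rule (map (mapp Fa) B @ map (mapp Tr) H)
                   (map (mapp St) B @ map (\<lambda>j. mapp Fa (H ! j)) J)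
                   (map (\<lambda>k. mapp Ext (H ! k)) (filter (\<lambda>k. k \<notin> set J) [0..<length H]))
                   (map (\<lambda>(pl,b,ts). (\<not> pl, b, ts)) ph))
         (subseqs [0..<length H])"

definition schema_rules :: "('r \<Rightarrow> nat) \<Rightarrow> 'r \<Rightarrow> (('r,'q) pn,'c,'b) rule list" where
  "schema_rules ar P = (let xs = map V [0..<ar P] in
     [Rule [(St P, xs)] [(Ext P, xs)] [] [],
      Rule [(St P, xs)] [(Tr P, xs)] [] [],
      Rule [(SS P, xs)] [(St P, xs)] [(Fa P, xs)] [],
      Rule [] [(Tr P, xs), (Fa P, xs)] [] []])"

definition repair_prog :: "'r list \<Rightarrow> ('r \<Rightarrow> nat) \<Rightarrow> ('r,'c,'b) ic list \<Rightarrow> (('r,'q) pn,'c,'b) rule list" where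
  "repair_prog Sch ar ics = concat (map ic_rules ics) @ concat (map (schema_rules ar) Sch)"

definition repair_preds :: "'r list \<Rightarrow> ('r,'q) pn set" where
  "repair_preds Sch = {p. \<exists>P\<in>set Sch. p = Tr P \<or> p = Fa P \<or> p = St P \<or> p = SS P}"

text \<open>FAtom: predicate symbol; XAtom p: the predicate variable X^p.\<close>
datatype ('p,'c,'b) fm = FAtom 'p "'c trm list" | XAtom 'p "'c trm list" | FBi 'b "'c trm list"
  | FEq "'c trm" "'c trm" | FBot | FAnd "('p,'c,'b) fm" "('p,'c,'b) fm"
  | FOr "('p,'c,'b) fm" "('p,'c,'b) fm" | FImp "('p,'c,'b) fm" "('p,'c,'b) fm"
  | FAll nat "('p,'c,'b) fm" | FEx nat "('p,'c,'b) fm"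

definition fneg :: "('p,'c,'b) fm \<Rightarrow> ('p,'c,'b) fm" where "fneg f = FImp f FBot"
definition ftop :: "('p,'c,'b) fm" where "ftop = FImp FBot FBot"
definition fconj :: "('p,'c,'b) fm list \<Rightarrow> ('p,'c,'b) fm" where "fconj fs = foldr FAnd fs ftop"
definition fdisj :: "('p,'c,'b) fm list \<Rightarrow> ('p,'c,'b) fm" where "fdisj fs = foldr FOr fs FBot"
definition fiff :: "('p,'c,'b) fm \<Rightarrow> ('p,'c,'b) fm \<Rightarrow> ('p,'c,'b) fm" where
  "fiff f g = FAnd (FImp f g) (FImp g f)"
definition fclose :: "nat set \<Rightarrow> ('p,'c,'b) fm \<Rightarrow> ('p,'c,'b) fm" where
  "fclose vs f = foldr FAll (sorted_list_of_set vs) f"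

definition blit_fm :: "('b,'c) blit \<Rightarrow> ('p,'c,'b) fm" where
  "blit_fm l = (case l of (pl,b,ts) \<Rightarrow> if pl then FBi b ts else fneg (FBi b ts))"

definition psi_rule :: "('p,'c,'b) rule \<Rightarrow> ('p,'c,'b) fm" where
  "psi_rule r = fclose (rule_vars r)
     (FImp (fconj (map (\<lambda>(p,ts). FAtom p ts) (rpos r) @
                   map (\<lambda>(p,ts). fneg (FAtom p ts)) (rneg r) @ map blit_fm (rbis r)))
           (fdisj (map (\<lambda>(p,ts). FAtom p ts) (rhead r))))"

definition psi :: "('p,'c,'b) rule list \<Rightarrow> ('p,'c,'b) fm" where
  "psi Pr = fconj (map psi_rule Pr)"

fun circ :: "'p set \<Rightarrow> ('p,'c,'b) fm \<Rightarrow> ('p,'c,'b) fm" where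
  "circ Ps (FAtom p ts) = (if p \<in> Ps then XAtom p ts else FAtom p ts)"
| "circ Ps (XAtom p ts) = XAtom p ts"
| "circ Ps (FBi b ts) = FBi b ts"
| "circ Ps (FEq s t) = FEq s t"
| "circ Ps FBot = FBot"
| "circ Ps (FAnd f g) = FAnd (circ Ps f) (circ Ps g)"
| "circ Ps (FOr f g) = FOr (circ Ps f) (circ Ps g)"
| "circ Ps (FImp f g) = FAnd (FImp (circ Ps f) (circ Ps g)) (FImp f g)"
| "circ Ps (FAll v f) = FAll v (circ Ps f)"
| "circ Ps (FEx v f) = FEx v (circ Ps f)"

record ('d,'c,'p,'b) struct =
  sdom :: "'d set"
  cint :: "'c \<Rightarrow> 'd"
  pint :: "'p \<Rightarrow> 'd list set"
  bint :: "'b \<Rightarrow> 'd list \<Rightarrow> bool"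

fun eval :: "('d,'c,'p,'b) struct \<Rightarrow> ('p \<Rightarrow> 'd list set) \<Rightarrow> (nat \<Rightarrow> 'd) \<Rightarrow> ('p,'c,'b) fm \<Rightarrow> bool" where
  "eval S X \<sigma> (FAtom p ts) = (map (tev (cint S) \<sigma>) ts \<in> pint S p)"
| "eval S X \<sigma> (XAtom p ts) = (map (tev (cint S) \<sigma>) ts \<in> X p)"
| "eval S X \<sigma> (FBi b ts) = bint S b (map (tev (cint S) \<sigma>) ts)"
| "eval S X \<sigma> (FEq s t) = (tev (cint S) \<sigma> s = tev (cint S) \<sigma> t)"
| "eval S X \<sigma> FBot = False"
| "eval S X \<sigma> (FAnd f g) = (eval S X \<sigma> f \<and> eval S X \<sigma> g)"
| "eval S X \<sigma> (FOr f g) = (eval S X \<sigma> f \<or> eval S X \<sigma> g)"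
| "eval S X \<sigma> (FImp f g) = (eval S X \<sigma> f \<longrightarrow> eval S X \<sigma> g)"
| "eval S X \<sigma> (FAll v f) = (\<forall>d\<in>sdom S. eval S X (\<sigma>(v := d)) f)"
| "eval S X \<sigma> (FEx v f) = (\<exists>d\<in>sdom S. eval S X (\<sigma>(v := d)) f)"

definition holds_with :: "('d,'c,'p,'b) struct \<Rightarrow> ('p \<Rightarrow> 'd list set) \<Rightarrow> ('p,'c,'b) fm \<Rightarrow> bool" where
  "holds_with S X f \<longleftrightarrow> (\<forall>\<sigma>. range \<sigma> \<subseteq> sdom S \<longrightarrow> eval S X \<sigma> f)"

text \<open>SO sentences: FO sentences, and Phi = psi & ~ (exists Xs. Xs < Ps & psi^circ(Xs)).\<close>
datatype ('p,'c,'b) so_sent = FO "('p,'c,'b) fm" | SOMin "'p set" "('p,'c,'b) fm"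

fun so_holds :: "('d,'c,'p,'b) struct \<Rightarrow> ('p,'c,'b) so_sent \<Rightarrow> bool" where
  "so_holds S (FO f) = holds_with S (\<lambda>_. {}) f"
| "so_holds S (SOMin Ps f) =
     (holds_with S (\<lambda>_. {}) f \<and>
      \<not> (\<exists>X. (\<forall>p\<in>Ps. X p \<subseteq> pint S p) \<and> (\<exists>p\<in>Ps. X p \<subset> pint S p) \<and>
             holds_with S X (circ Ps f)))"

text \<open>Every structure satisfying the domain closure axiom over cs is isomorphic to one whose domain is
  a subset of the constant type, so quantifying over those structures gives SO entailment.\<close>
definition wf_struct :: "('p \<Rightarrow> nat) \<Rightarrow> 'c list \<Rightarrow> ('b \<Rightarrow> 'c list \<Rightarrow> bool) \<Rightarrow> ('d,'c,'p,'b) struct \<Rightarrow> bool" where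
  "wf_struct arity cs bi S \<longleftrightarrow>
     sdom S \<noteq> {} \<and> (\<forall>c\<in>set cs. cint S c \<in> sdom S) \<and>
     (\<forall>p. \<forall>t\<in>pint S p. length t = arity p \<and> set t \<subseteq> sdom S) \<and>
     (\<forall>b as. set as \<subseteq> set cs \<longrightarrow> bint S b (map (cint S) as) = bi b as)"

definition so_entails :: "('p \<Rightarrow> nat) \<Rightarrow> 'c list \<Rightarrow> ('b \<Rightarrow> 'c list \<Rightarrow> bool) \<Rightarrow>
    ('p,'c,'b) so_sent set \<Rightarrow> ('p,'c,'b) fm \<Rightarrow> bool" where
  "so_entails arity cs bi \<Gamma> f \<longleftrightarrow>
     (\<forall>S :: ('c,'c,'p,'b) struct. wf_struct arity cs bi S \<longrightarrow>
        (\<forall>g\<in>\<Gamma>. so_holds S g) \<longrightarrow> so_holds S (FO f))"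

definition RD :: "'r list \<Rightarrow> ('r \<Rightarrow> nat) \<Rightarrow> 'c list \<Rightarrow> ('r \<times> 'c list) list \<Rightarrow> (('r,'q) pn,'c,'b) fm" where
  "RD Sch ar cs D = fconj
     ([FAll 0 (fdisj (map (\<lambda>c. FEq (V 0) (Cn c)) cs)),
       fconj [fneg (FEq (Cn c) (Cn d)). c \<leftarrow> cs, d \<leftarrow> cs, c \<noteq> d]] @
      map (\<lambda>P. foldr FAll [0..<ar P]
                 (fiff (FAtom (Ext P) (map V [0..<ar P]))
                       (fdisj [fconj (map (\<lambda>i. FEq (V i) (Cn (t ! i))) [0..<ar P]).
                               (Q, t) \<leftarrow> D, Q = P]))) Sch)"

definition wf_db :: "'r list \<Rightarrow> ('r \<Rightarrow> nat) \<Rightarrow> 'c list \<Rightarrow> ('r \<times> 'c list) list \<Rightarrow> bool" where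
  "wf_db Sch ar cs D \<longleftrightarrow> (\<forall>(P,t)\<in>set D. P \<in> set Sch \<and> length t = ar P \<and> set t \<subseteq> set cs)"

fun wf_ic :: "'r list \<Rightarrow> ('r \<Rightarrow> nat) \<Rightarrow> 'c list \<Rightarrow> ('r,'c,'b) ic \<Rightarrow> bool" where
  "wf_ic Sch ar cs (IC B H ph) \<longleftrightarrow>
     (\<forall>a\<in>set B \<union> set H. fst a \<in> set Sch \<and> length (snd a) = ar (fst a) \<and> atom_consts a \<subseteq> set cs) \<and>
     (\<forall>l\<in>set ph. blit_consts l \<subseteq> set cs)"

definition defined_preds :: "('p,'c,'b) rule list \<Rightarrow> 'p set" where
  "defined_preds Pr = {p. \<exists>r\<in>set Pr. p \<in> fst ` set (rhead r)}"

definition deps :: "('p,'c,'b) rule list \<Rightarrow> ('p \<times> 'p) set" where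
  "deps Pr = {(p,q). \<exists>r\<in>set Pr. q \<in> fst ` set (rhead r) \<and> p \<in> fst ` (set (rpos r) \<union> set (rneg r))}"

definition query_program :: "'r list \<Rightarrow> ('r \<Rightarrow> nat) \<Rightarrow> ('q \<Rightarrow> nat) \<Rightarrow> 'c list \<Rightarrow> 'q \<Rightarrow>
    (('r,'q) pn,'c,'b) rule list \<Rightarrow> bool" where
  "query_program Sch ar arq cs ans PQ \<longleftrightarrow>
     (\<forall>r\<in>set PQ. length (rhead r) = 1) \<and>
     (\<forall>r\<in>set PQ. \<forall>a\<in>set (rhead r). \<exists>q. fst a = Qp q) \<and>
     (\<forall>r\<in>set PQ. \<forall>a\<in>set (rpos r) \<union> set (rneg r).
        (\<exists>P\<in>set Sch. fst a = SS P) \<or> fst a \<in> defined_preds PQ) \<and>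
     (\<forall>r\<in>set PQ. \<forall>a\<in>set (rpos r) \<union> set (rneg r). fst a \<noteq> Qp ans) \<and>
     acyclic (deps PQ) \<and>
     (\<forall>r\<in>set PQ. rule_vars r \<subseteq> \<Union> (atom_vars ` set (rpos r))) \<and>
     (\<forall>r\<in>set PQ. \<forall>a\<in>rule_atoms r. length (snd a) = pn_arity ar arq (fst a)) \<and>
     (\<forall>r\<in>set PQ. rule_consts r \<subseteq> set cs)"

end

theory Submission
  imports Defs
begin


lemma eval_fconj[simp]: "eval S X \<sigma> (fconj fs) \<longleftrightarrow> (\<forall>g\<in>set fs. eval S X \<sigma> g)"
  by (induction fs) (auto simp: fconj_def ftop_def)

lemma eval_fdisj[simp]: "eval S X \<sigma> (fdisj fs) \<longleftrightarrow> (\<exists>g\<in>set fs. eval S X \<sigma> g)"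
  by (induction fs) (auto simp: fdisj_def)

lemma eval_circ_fconj: "eval S X \<sigma> (circ Ps (fconj fs)) \<longleftrightarrow> (\<forall>g\<in>set fs. eval S X \<sigma> (circ Ps g))"
  by (induction fs) (auto simp: fconj_def ftop_def)

lemma eval_circ_fdisj: "eval S X \<sigma> (circ Ps (fdisj fs)) \<longleftrightarrow> (\<exists>g\<in>set fs. eval S X \<sigma> (circ Ps g))"
  by (induction fs) (auto simp: fdisj_def)

lemma circ_foldr_All: "circ Ps (foldr FAll L g) = foldr FAll L (circ Ps g)"
  by (induction L) auto

lemma eval_circ_empty: "eval S X \<sigma> (circ {} g) \<longleftrightarrow> eval S X \<sigma> g"
  by (induction g arbitrary: \<sigma>) auto

lemma eval_foldr_All_intro:
  assumes "\<forall>\<sigma>. range \<sigma> \<subseteq> sdom S \<longrightarrow> eval S X \<sigma> g" "range \<sigma> \<subseteq> sdom S"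
  shows "eval S X \<sigma> (foldr FAll L g)"
  using assms(2)
proof (induction L arbitrary: \<sigma>)
  case Nil then show ?case using assms(1) by auto
next
  case (Cons v L)
  have "range (\<sigma>(v := d)) \<subseteq> sdom S" if "d \<in> sdom S" for d
    using Cons.prems that by (auto simp: image_subset_iff)
  then show ?case using Cons.IH by auto
qed

lemma eval_foldr_All_elim:
  assumes "eval S X \<sigma> (foldr FAll L g)" "range \<sigma> \<subseteq> sdom S"
  shows "eval S X \<sigma> g"
  using assms
proof (induction L arbitrary: \<sigma>)
  case Nil then show ?case by auto
next
  case (Cons v L)
  have "\<sigma> v \<in> sdom S" using Cons.prems(2) by auto
  then have "eval S X (\<sigma>(v := \<sigma> v)) (foldr FAll L g)" using Cons.prems(1) by auto
  then show ?case using Cons.IH Cons.prems(2) by auto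
qed

lemma holds_foldr_All:
  "holds_with S X (foldr FAll L g) \<longleftrightarrow> (\<forall>\<sigma>. range \<sigma> \<subseteq> sdom S \<longrightarrow> eval S X \<sigma> g)"
  unfolding holds_with_def using eval_foldr_All_intro eval_foldr_All_elim by metis

lemma holds_fconj: "holds_with S X (fconj fs) \<longleftrightarrow> (\<forall>g\<in>set fs. holds_with S X g)"
  unfolding holds_with_def by auto

lemma holds_circ_fconj: "holds_with S X (circ Ps (fconj fs)) \<longleftrightarrow> (\<forall>g\<in>set fs. holds_with S X (circ Ps g))"
  unfolding holds_with_def by (auto simp: eval_circ_fconj)

lemma all_comp_iff:
  fixes P :: "(nat \<Rightarrow> 'b) \<Rightarrow> bool" and f :: "'a \<Rightarrow> 'b"
  shows "(\<forall>\<sigma>. range \<sigma> \<subseteq> f ` A \<longrightarrow> P \<sigma>) \<longleftrightarrow> (\<forall>\<sigma>'. range \<sigma>' \<subseteq> A \<longrightarrow> P (f \<circ> \<sigma>'))"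
proof
  assume "\<forall>\<sigma>. range \<sigma> \<subseteq> f ` A \<longrightarrow> P \<sigma>"
  then show "\<forall>\<sigma>'. range \<sigma>' \<subseteq> A \<longrightarrow> P (f \<circ> \<sigma>')" by (auto simp: image_subset_iff)
next
  assume H: "\<forall>\<sigma>'. range \<sigma>' \<subseteq> A \<longrightarrow> P (f \<circ> \<sigma>')"
  show "\<forall>\<sigma>. range \<sigma> \<subseteq> f ` A \<longrightarrow> P \<sigma>"
  proof (intro allI impI)
    fix \<sigma> :: "nat \<Rightarrow> 'b" assume r: "range \<sigma> \<subseteq> f ` A"
    have "range (inv_into A f \<circ> \<sigma>) \<subseteq> A" using r by (auto simp: image_subset_iff inv_into_into)
    moreover have "f \<circ> (inv_into A f \<circ> \<sigma>) = \<sigma>"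
    proof
      fix x have "\<sigma> x \<in> f ` A" using r by auto
      then show "(f \<circ> (inv_into A f \<circ> \<sigma>)) x = \<sigma> x" by (simp add: f_inv_into_f)
    qed
    ultimately show "P \<sigma>" using H by metis
  qed
qed

lemma tev_comp: "tev f (f \<circ> \<sigma>) t = f (tev id \<sigma> t)"
  by (cases t) auto

lemma map_tev_comp: "map (tev f (f \<circ> \<sigma>)) ts = map f (map (tev id \<sigma>) ts)"
  by (auto simp: tev_comp)

lemma tev_in:
  assumes "range \<sigma> \<subseteq> A" "\<Union> (trm_consts ` set ts) \<subseteq> A"
  shows "set (map (tev id \<sigma>) ts) \<subseteq> A"
proof -
  have "tev id \<sigma> t \<in> A" if "t \<in> set ts" for t
  proof (cases t)
    case (V n) then show ?thesis using assms(1) by auto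
  next
    case (Cn c)
    have "trm_consts t \<subseteq> A" using assms(2) that by (auto simp del: trm_consts.simps)
    then show ?thesis using Cn by simp
  qed
  then show ?thesis by auto
qed



definition gr :: "'c list \<Rightarrow> ('c \<Rightarrow> 'd) \<Rightarrow> ('p \<Rightarrow> 'd list set) \<Rightarrow> ('p \<times> 'c list) set" where
  "gr cs f J = {(p,t). set t \<subseteq> set cs \<and> map f t \<in> J p}"

definition Yof :: "'p set \<Rightarrow> ('p \<Rightarrow> 'd list set) \<Rightarrow> ('p \<Rightarrow> 'd list set) \<Rightarrow> 'p \<Rightarrow> 'd list set" where
  "Yof Ps X J p = (if p \<in> Ps then X p else J p)"

lemma atom_consts_sub: "atom_consts a \<subseteq> A \<Longrightarrow> \<Union> (trm_consts ` set (snd a)) \<subseteq> A"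
  by (simp add: atom_consts_def)

lemma eval_atom:
  assumes "range \<sigma> \<subseteq> set cs" "atom_consts a \<subseteq> set cs"
  shows "eval S X (cint S \<circ> \<sigma>) (case a of (p,ts) \<Rightarrow> FAtom p ts) \<longleftrightarrow> gatom \<sigma> a \<in> gr cs (cint S) (pint S)"
proof -
  have "set (map (tev id \<sigma>) (snd a)) \<subseteq> set cs"
    using tev_in[OF assms(1) atom_consts_sub[OF assms(2)]] .
  then show ?thesis
    by (cases a) (simp add: gr_def gatom_def map_tev_comp del: map_map)
qed

lemma eval_circ_atom:
  assumes "range \<sigma> \<subseteq> set cs" "atom_consts a \<subseteq> set cs"
  shows "eval S X (cint S \<circ> \<sigma>) (circ Ps (case a of (p,ts) \<Rightarrow> FAtom p ts)) \<longleftrightarrow>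
         gatom \<sigma> a \<in> gr cs (cint S) (Yof Ps X (pint S))"
proof -
  have "set (map (tev id \<sigma>) (snd a)) \<subseteq> set cs"
    using tev_in[OF assms(1) atom_consts_sub[OF assms(2)]] .
  then show ?thesis
    by (cases a) (simp add: gr_def gatom_def map_tev_comp Yof_def del: map_map)
qed

lemma eval_circ_natom:
  assumes "range \<sigma> \<subseteq> set cs" "atom_consts a \<subseteq> set cs"
  shows "eval S X (cint S \<circ> \<sigma>) (circ Ps (case a of (p,ts) \<Rightarrow> fneg (FAtom p ts))) \<longleftrightarrow>
         gatom \<sigma> a \<notin> gr cs (cint S) (Yof Ps X (pint S)) \<and> gatom \<sigma> a \<notin> gr cs (cint S) (pint S)"
proof -
  have "set (map (tev id \<sigma>) (snd a)) \<subseteq> set cs"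
    using tev_in[OF assms(1) atom_consts_sub[OF assms(2)]] .
  then show ?thesis
    by (cases a) (simp add: gr_def gatom_def map_tev_comp Yof_def fneg_def del: map_map)
qed

lemma eval_circ_blit:
  assumes "range \<sigma> \<subseteq> set cs" "blit_consts l \<subseteq> set cs"
    and bi: "\<forall>b as. set as \<subseteq> set cs \<longrightarrow> bint S b (map (cint S) as) = bi b as"
  shows "eval S X (cint S \<circ> \<sigma>) (circ Ps (blit_fm l)) \<longleftrightarrow>
         (case l of (pl,b,ts) \<Rightarrow> bi b (map (tev id \<sigma>) ts) = pl)"
proof -
  obtain pl b ts where l: "l = (pl,b,ts)" by (cases l) auto
  have "set (map (tev id \<sigma>) ts) \<subseteq> set cs"
    using tev_in[OF assms(1)] assms(2) l by (simp add: blit_consts_def)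
  then have "bint S b (map (tev (cint S) (cint S \<circ> \<sigma>)) ts) = bi b (map (tev id \<sigma>) ts)"
    using bi by (simp add: map_tev_comp del: map_map)
  then show ?thesis using l by (auto simp: blit_fm_def fneg_def)
qed

lemma gr_Yof_sub: "\<forall>p\<in>Ps. X p \<subseteq> J p \<Longrightarrow> gr cs f (Yof Ps X J) \<subseteq> gr cs f J"
proof
  fix x assume A: "\<forall>p\<in>Ps. X p \<subseteq> J p" and x: "x \<in> gr cs f (Yof Ps X J)"
  obtain p t where "x = (p,t)" by (cases x)
  then show "x \<in> gr cs f J" using A x by (cases "p \<in> Ps") (auto simp: gr_def Yof_def)
qed

definition rsat :: "'c list \<Rightarrow> ('b \<Rightarrow> 'c list \<Rightarrow> bool) \<Rightarrow> ('p,'c,'b) rule \<Rightarrow>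
    ('p \<times> 'c list) set \<Rightarrow> ('p \<times> 'c list) set \<Rightarrow> (nat \<Rightarrow> 'c) \<Rightarrow> bool" where
  "rsat cs bi r M N \<sigma> \<longleftrightarrow>
        ((\<forall>a\<in>set (rpos r). gatom \<sigma> a \<in> N) \<longrightarrow>
        (\<forall>a\<in>set (rneg r). gatom \<sigma> a \<notin> M) \<longrightarrow>
        bis_true bi \<sigma> (rbis r) \<longrightarrow>
        (\<exists>a\<in>set (rhead r). gatom \<sigma> a \<in> N))"

lemma reduct_model_rsat:
  "reduct_model cs bi Pr M N \<longleftrightarrow> (\<forall>r\<in>set Pr. \<forall>\<sigma>. range \<sigma> \<subseteq> set cs \<longrightarrow> rsat cs bi r M N \<sigma>)"
  by (simp add: reduct_model_def rsat_def)

lemma rule_consts_parts: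
  assumes "rule_consts r \<subseteq> A"
  shows "\<forall>a\<in>set (rhead r). atom_consts a \<subseteq> A" "\<forall>a\<in>set (rpos r). atom_consts a \<subseteq> A"
    "\<forall>a\<in>set (rneg r). atom_consts a \<subseteq> A" "\<forall>l\<in>set (rbis r). blit_consts l \<subseteq> A"
  using assms by (auto simp: rule_consts_def rule_atoms_def)

lemma Bex_image_comp: "Bex (f ` A) g = Bex A (g \<circ> f)" by auto
lemma Bex_comp: "Bex A (g \<circ> h) = (\<exists>x\<in>A. g (h x))" by simp
lemma Ball_comp: "Ball A (g \<circ> h) = (\<forall>x\<in>A. g (h x))" by simp

lemma eval_circ_rule_body:
  assumes "range \<sigma> \<subseteq> set cs" "rule_consts r \<subseteq> set cs"
    and bi: "\<forall>b as. set as \<subseteq> set cs \<longrightarrow> bint S b (map (cint S) as) = bi b as"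
    and XP: "\<forall>p\<in>Ps. X p \<subseteq> pint S p"
  shows "eval S X (cint S \<circ> \<sigma>) (circ Ps (fconj (map (\<lambda>(p,ts). FAtom p ts) (rpos r) @
                   map (\<lambda>(p,ts). fneg (FAtom p ts)) (rneg r) @ map blit_fm (rbis r)))) \<longleftrightarrow>
     ((\<forall>a\<in>set (rpos r). gatom \<sigma> a \<in> gr cs (cint S) (Yof Ps X (pint S))) \<and>
      (\<forall>a\<in>set (rneg r). gatom \<sigma> a \<notin> gr cs (cint S) (pint S)) \<and> bis_true bi \<sigma> (rbis r))"
proof -
  note rc = rule_consts_parts[OF assms(2)]
  have sub: "gr cs (cint S) (Yof Ps X (pint S)) \<subseteq> gr cs (cint S) (pint S)"
    using gr_Yof_sub[OF XP] .
  have 1: "(\<forall>a\<in>set (rpos r). eval S X (cint S \<circ> \<sigma>) (circ Ps (case a of (p,ts) \<Rightarrow> FAtom p ts)))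
     \<longleftrightarrow> (\<forall>a\<in>set (rpos r). gatom \<sigma> a \<in> gr cs (cint S) (Yof Ps X (pint S)))"
    using eval_circ_atom[OF assms(1)] rc(2) by blast
  have 2: "(\<forall>a\<in>set (rneg r). eval S X (cint S \<circ> \<sigma>) (circ Ps (case a of (p,ts) \<Rightarrow> fneg (FAtom p ts))))
     \<longleftrightarrow> (\<forall>a\<in>set (rneg r). gatom \<sigma> a \<notin> gr cs (cint S) (pint S))"
    using eval_circ_natom[OF assms(1)] rc(3) sub by blast
  have 3: "(\<forall>l\<in>set (rbis r). eval S X (cint S \<circ> \<sigma>) (circ Ps (blit_fm l)))
     \<longleftrightarrow> bis_true bi \<sigma> (rbis r)"
    using eval_circ_blit[OF assms(1) _ bi] rc(4) unfolding bis_true_def by fastforce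
  show ?thesis
    unfolding eval_circ_fconj set_append set_map ball_Un Ball_image_comp Ball_comp
    by (simp only: 1 2 3)
qed

lemma eval_circ_rule_head:
  assumes "range \<sigma> \<subseteq> set cs" "rule_consts r \<subseteq> set cs"
  shows "eval S X (cint S \<circ> \<sigma>) (circ Ps (fdisj (map (\<lambda>(p,ts). FAtom p ts) (rhead r)))) \<longleftrightarrow>
     (\<exists>a\<in>set (rhead r). gatom \<sigma> a \<in> gr cs (cint S) (Yof Ps X (pint S)))"
proof -
  note rc = rule_consts_parts[OF assms(2)]
  have 1: "(\<exists>a\<in>set (rhead r). eval S X (cint S \<circ> \<sigma>) (circ Ps (case a of (p,ts) \<Rightarrow> FAtom p ts)))
     \<longleftrightarrow> (\<exists>a\<in>set (rhead r). gatom \<sigma> a \<in> gr cs (cint S) (Yof Ps X (pint S)))"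
    using eval_circ_atom[OF assms(1)] rc(1) by blast
  show ?thesis unfolding eval_circ_fdisj set_map Bex_image_comp Bex_comp by (simp only: 1)
qed

lemma Yof_empty[simp]: "Yof {} X J = J" by (simp add: Yof_def fun_eq_iff)

lemma eval_circ_psi_rule:
  assumes "range \<sigma> \<subseteq> set cs" "rule_consts r \<subseteq> set cs"
    and bi: "\<forall>b as. set as \<subseteq> set cs \<longrightarrow> bint S b (map (cint S) as) = bi b as"
    and XP: "\<forall>p\<in>Ps. X p \<subseteq> pint S p"
  shows "eval S X (cint S \<circ> \<sigma>) (circ Ps (FImp (fconj (map (\<lambda>(p,ts). FAtom p ts) (rpos r) @
                   map (\<lambda>(p,ts). fneg (FAtom p ts)) (rneg r) @ map blit_fm (rbis r)))
           (fdisj (map (\<lambda>(p,ts). FAtom p ts) (rhead r))))) \<longleftrightarrow>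
     rsat cs bi r (gr cs (cint S) (pint S)) (gr cs (cint S) (pint S)) \<sigma> \<and>
     rsat cs bi r (gr cs (cint S) (pint S)) (gr cs (cint S) (Yof Ps X (pint S))) \<sigma>"
proof -
  have XP0: "\<forall>p\<in>{}. X p \<subseteq> pint S p" by simp
  note b1 = eval_circ_rule_body[OF assms(1,2) bi XP]
  note b0 = eval_circ_rule_body[OF assms(1,2) bi XP0, unfolded eval_circ_empty Yof_empty]
  note h1 = eval_circ_rule_head[OF assms(1,2), of S X Ps]
  note h0 = eval_circ_rule_head[OF assms(1,2), of S X "{}", unfolded eval_circ_empty Yof_empty]
  show ?thesis unfolding circ.simps eval.simps b1 b0 h1 h0 rsat_def by blast
qed

lemma holds_circ_psi:
  assumes dom: "sdom S = cint S ` set cs"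
    and bi: "\<forall>b as. set as \<subseteq> set cs \<longrightarrow> bint S b (map (cint S) as) = bi b as"
    and rc: "\<forall>r\<in>set Pr. rule_consts r \<subseteq> set cs"
    and XP: "\<forall>p\<in>Ps. X p \<subseteq> pint S p"
  shows "holds_with S X (circ Ps (psi Pr)) \<longleftrightarrow>
     reduct_model cs bi Pr (gr cs (cint S) (pint S)) (gr cs (cint S) (pint S)) \<and>
     reduct_model cs bi Pr (gr cs (cint S) (pint S)) (gr cs (cint S) (Yof Ps X (pint S)))"
proof -
  have "holds_with S X (circ Ps (psi_rule r)) \<longleftrightarrow>
     (\<forall>\<sigma>. range \<sigma> \<subseteq> set cs \<longrightarrow>
     rsat cs bi r (gr cs (cint S) (pint S)) (gr cs (cint S) (pint S)) \<sigma> \<and>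
     rsat cs bi r (gr cs (cint S) (pint S)) (gr cs (cint S) (Yof Ps X (pint S))) \<sigma>)"
    if r: "r \<in> set Pr" for r
    unfolding psi_rule_def fclose_def circ_foldr_All holds_foldr_All dom all_comp_iff
    using eval_circ_psi_rule[OF _ _ bi XP] rc r by blast
  then show ?thesis
    unfolding psi_def holds_circ_fconj reduct_model_rsat by auto
qed

lemma holds_psi:
  assumes dom: "sdom S = cint S ` set cs"
    and bi: "\<forall>b as. set as \<subseteq> set cs \<longrightarrow> bint S b (map (cint S) as) = bi b as"
    and rc: "\<forall>r\<in>set Pr. rule_consts r \<subseteq> set cs"
  shows "holds_with S X (psi Pr) \<longleftrightarrow>
     reduct_model cs bi Pr (gr cs (cint S) (pint S)) (gr cs (cint S) (pint S))"
proof -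
  have "holds_with S X (psi Pr) \<longleftrightarrow> holds_with S X (circ {} (psi Pr))"
    unfolding holds_with_def eval_circ_empty ..
  then show ?thesis using holds_circ_psi[OF dom bi rc, of "{}" X] by simp
qed



definition so_min :: "'c list \<Rightarrow> ('b \<Rightarrow> 'c list \<Rightarrow> bool) \<Rightarrow> ('p,'c,'b) rule list \<Rightarrow> 'p set \<Rightarrow>
    ('p \<times> 'c list) set \<Rightarrow> bool" where
  "so_min cs bi Pr Ps M \<longleftrightarrow> reduct_model cs bi Pr M M \<and>
     \<not> (\<exists>N. N \<subset> M \<and> (\<forall>x\<in>M. fst x \<notin> Ps \<longrightarrow> x \<in> N) \<and> reduct_model cs bi Pr M N)"

lemma so_holds_SOMin:
  assumes dom: "sdom S = cint S ` set cs"
    and bi: "\<forall>b as. set as \<subseteq> set cs \<longrightarrow> bint S b (map (cint S) as) = bi b as"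
    and rc: "\<forall>r\<in>set Pr. rule_consts r \<subseteq> set cs"
    and inj: "inj_on (cint S) (set cs)"
    and tup: "\<forall>p. \<forall>u\<in>pint S p. set u \<subseteq> sdom S"
  shows "so_holds S (SOMin Ps (psi Pr)) \<longleftrightarrow> so_min cs bi Pr Ps (gr cs (cint S) (pint S))"
proof -
  define f where "f = cint S"
  define M where "M = gr cs f (pint S)"
  have ex: "(\<exists>X. (\<forall>p\<in>Ps. X p \<subseteq> pint S p) \<and> (\<exists>p\<in>Ps. X p \<subset> pint S p) \<and>
             holds_with S X (circ Ps (psi Pr))) \<longleftrightarrow>
        (\<exists>N. N \<subset> M \<and> (\<forall>x\<in>M. fst x \<notin> Ps \<longrightarrow> x \<in> N) \<and> reduct_model cs bi Pr M N)"
    if RMM: "reduct_model cs bi Pr M M"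
  proof
    assume "\<exists>X. (\<forall>p\<in>Ps. X p \<subseteq> pint S p) \<and> (\<exists>p\<in>Ps. X p \<subset> pint S p) \<and>
             holds_with S X (circ Ps (psi Pr))"
    then obtain X where XP: "\<forall>p\<in>Ps. X p \<subseteq> pint S p" and st: "\<exists>p\<in>Ps. X p \<subset> pint S p"
      and h: "holds_with S X (circ Ps (psi Pr))" by blast
    define N where "N = gr cs f (Yof Ps X (pint S))"
    have rN: "reduct_model cs bi Pr M N"
      using holds_circ_psi[OF dom bi rc XP] h unfolding M_def N_def f_def by blast
    have sub: "N \<subseteq> M" unfolding N_def M_def using gr_Yof_sub[OF XP] .
    have ag: "\<forall>x\<in>M. fst x \<notin> Ps \<longrightarrow> x \<in> N"
      by (auto simp: M_def N_def gr_def Yof_def)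
    obtain p u where p: "p \<in> Ps" "u \<in> pint S p" "u \<notin> X p" using st by blast
    have us: "set u \<subseteq> f ` set cs" using tup p(2) dom unfolding f_def by blast
    define t where "t = map (inv_into (set cs) f) u"
    have mt: "map f t = u" unfolding t_def using us
      by (auto simp: map_idI f_inv_into_f subset_iff)
    have ts: "set t \<subseteq> set cs" unfolding t_def using us by (auto intro: inv_into_into)
    have "(p,t) \<in> M" "(p,t) \<notin> N" using mt ts p by (auto simp: M_def N_def gr_def Yof_def)
    then show "\<exists>N. N \<subset> M \<and> (\<forall>x\<in>M. fst x \<notin> Ps \<longrightarrow> x \<in> N) \<and> reduct_model cs bi Pr M N"
      using sub ag rN by blast
  next
    assume "\<exists>N. N \<subset> M \<and> (\<forall>x\<in>M. fst x \<notin> Ps \<longrightarrow> x \<in> N) \<and> reduct_model cs bi Pr M N"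
    then obtain N where NM: "N \<subset> M" and ag: "\<forall>x\<in>M. fst x \<notin> Ps \<longrightarrow> x \<in> N"
      and rN: "reduct_model cs bi Pr M N" by blast
    define X where "X p = {map f t | t. (p,t) \<in> N}" for p
    have Mcs: "set t \<subseteq> set cs" if "(p,t) \<in> M" for p t using that by (simp add: M_def gr_def)
    have injm: "map f t = map f t' \<longleftrightarrow> t = t'" if "set t \<subseteq> set cs" "set t' \<subseteq> set cs" for t t'
      using inj that unfolding f_def by (intro inj_on_map_eq_map) (auto intro: inj_on_subset)
    have XP: "\<forall>p\<in>Ps. X p \<subseteq> pint S p"
      using NM by (auto simp: X_def M_def gr_def)
    have grY: "gr cs f (Yof Ps X (pint S)) = N"
    proof (rule set_eqI)
      fix x
      show "x \<in> gr cs f (Yof Ps X (pint S)) \<longleftrightarrow> x \<in> N"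
      proof (cases x)
        case (Pair p t)
        note x = Pair
        show ?thesis
        proof (cases "p \<in> Ps")
          case True
          have "(\<exists>t'. map f t = map f t' \<and> (p,t') \<in> N) \<and> set t \<subseteq> set cs \<longleftrightarrow> (p,t) \<in> N"
            using injm Mcs NM by blast
          then show ?thesis using True x by (auto simp: gr_def Yof_def X_def)
        next
          case False
          then show ?thesis using x ag NM by (auto simp: gr_def Yof_def M_def)
        qed
      qed
    qed
    obtain x where x: "x \<in> M" "x \<notin> N" using NM by blast
    obtain p t where pt: "x = (p,t)" by (cases x)
    have pP: "p \<in> Ps" using ag x pt by auto
    have "map f t \<notin> X p"
    proof
      assume "map f t \<in> X p"
      then obtain t' where "map f t = map f t'" "(p,t') \<in> N" by (auto simp: X_def)
      then show False using injm Mcs NM x pt by blast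
    qed
    moreover have "map f t \<in> pint S p" using x pt by (simp add: M_def gr_def)
    ultimately have st: "\<exists>p\<in>Ps. X p \<subset> pint S p" using XP pP by blast
    have "holds_with S X (circ Ps (psi Pr))"
      using holds_circ_psi[OF dom bi rc XP] RMM rN grY unfolding M_def f_def by simp
    then show "\<exists>X. (\<forall>p\<in>Ps. X p \<subseteq> pint S p) \<and> (\<exists>p\<in>Ps. X p \<subset> pint S p) \<and>
             holds_with S X (circ Ps (psi Pr))" using XP st by blast
  qed
  have h0: "holds_with S (\<lambda>_. {}) (psi Pr) \<longleftrightarrow> reduct_model cs bi Pr M M"
    using holds_psi[OF dom bi rc] unfolding M_def f_def by blast
  show ?thesis unfolding so_holds.simps so_min_def h0 M_def[symmetric] f_def[symmetric]
    using ex by blast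
qed



lemma all_tuple:
  assumes "a0 \<in> A"
  shows "(\<forall>\<sigma>::nat\<Rightarrow>'a. range \<sigma> \<subseteq> A \<longrightarrow> \<Psi> (map \<sigma> [0..<n])) \<longleftrightarrow>
         (\<forall>u. length u = n \<longrightarrow> set u \<subseteq> A \<longrightarrow> \<Psi> u)"
proof
  assume H: "\<forall>\<sigma>::nat\<Rightarrow>'a. range \<sigma> \<subseteq> A \<longrightarrow> \<Psi> (map \<sigma> [0..<n])"
  show "\<forall>u. length u = n \<longrightarrow> set u \<subseteq> A \<longrightarrow> \<Psi> u"
  proof (intro allI impI)
    fix u :: "'a list" assume u: "length u = n" "set u \<subseteq> A"
    define \<sigma> where "\<sigma> i = (if i < n then u ! i else a0)" for i
    have "range \<sigma> \<subseteq> A" using u assms by (auto simp: \<sigma>_def)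
    moreover have "map \<sigma> [0..<n] = u" using u by (intro nth_equalityI) (auto simp: \<sigma>_def)
    ultimately show "\<Psi> u" using H by metis
  qed
next
  assume "\<forall>u. length u = n \<longrightarrow> set u \<subseteq> A \<longrightarrow> \<Psi> u"
  moreover have "set (map \<sigma> [0..<n]) \<subseteq> A" if "range \<sigma> \<subseteq> A" for \<sigma> :: "nat \<Rightarrow> 'a"
    using that by auto
  ultimately show "\<forall>\<sigma>::nat\<Rightarrow>'a. range \<sigma> \<subseteq> A \<longrightarrow> \<Psi> (map \<sigma> [0..<n])" by simp
qed

lemma map_eq_nth_iff: "length t = n \<Longrightarrow> (\<forall>i<n. \<sigma> i = f (t ! i)) \<longleftrightarrow> map \<sigma> [0..<n] = map f t"
  by (auto simp: list_eq_iff_nth_eq)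

lemma eval_RD_disj:
  "eval S X \<sigma> (fdisj [fconj (map (\<lambda>i. FEq (V i) (Cn (t ! i))) [0..<n]). (Q, t) \<leftarrow> D, Q = P])
   \<longleftrightarrow> (\<exists>t. (P,t) \<in> set D \<and> (\<forall>i<n. \<sigma> i = cint S (t ! i)))"
  by (induction D) (auto split: if_splits)

lemma holds_RD:
  assumes ne: "sdom S \<noteq> {}" and wfdb: "wf_db Sch ar cs D"
  shows "holds_with S X (RD Sch ar cs D) \<longleftrightarrow>
    sdom S \<subseteq> cint S ` set cs \<and> inj_on (cint S) (set cs) \<and>
    (\<forall>P\<in>set Sch. \<forall>u. length u = ar P \<longrightarrow> set u \<subseteq> sdom S \<longrightarrow>
        (u \<in> pint S (Ext P) \<longleftrightarrow> (\<exists>t. (P,t) \<in> set D \<and> u = map (cint S) t)))"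
proof -
  obtain d0 where d0: "d0 \<in> sdom S" using ne by blast
  define f where "f = cint S"
  have dc: "holds_with S X (FAll 0 (fdisj (map (\<lambda>c. FEq (V 0) (Cn c)) cs))) \<longleftrightarrow> sdom S \<subseteq> f ` set cs"
  proof -
    have "holds_with S X (FAll 0 (fdisj (map (\<lambda>c. FEq (V 0) (Cn c)) cs))) \<longleftrightarrow>
        (\<forall>\<sigma>::nat\<Rightarrow>_. range \<sigma> \<subseteq> sdom S \<longrightarrow> (\<exists>c\<in>set cs. \<sigma> 0 = f c))"
      using holds_foldr_All[of S X "[0]"] by (simp add: f_def)
    also have "\<dots> \<longleftrightarrow> sdom S \<subseteq> f ` set cs"
    proof
      assume H: "\<forall>\<sigma>. range \<sigma> \<subseteq> sdom S \<longrightarrow> (\<exists>c\<in>set cs. \<sigma> 0 = f c)"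
      show "sdom S \<subseteq> f ` set cs"
      proof
        fix d assume "d \<in> sdom S"
        then have "range (\<lambda>_::nat. d) \<subseteq> sdom S" by auto
        then show "d \<in> f ` set cs" using H by fastforce
      qed
    next
      assume "sdom S \<subseteq> f ` set cs"
      then show "\<forall>\<sigma>::nat\<Rightarrow>_. range \<sigma> \<subseteq> sdom S \<longrightarrow> (\<exists>c\<in>set cs. \<sigma> 0 = f c)"
        by (metis image_iff rangeI subset_iff)
    qed
    finally show ?thesis .
  qed
  have un: "holds_with S X (fconj [fneg (FEq (Cn c) (Cn d)). c \<leftarrow> cs, d \<leftarrow> cs, c \<noteq> d]) \<longleftrightarrow>
      inj_on f (set cs)"
  proof -
    have "range (\<lambda>_::nat. d0) \<subseteq> sdom S" using d0 by auto
    then have "holds_with S X (fconj [fneg (FEq (Cn c) (Cn d)). c \<leftarrow> cs, d \<leftarrow> cs, c \<noteq> d]) \<longleftrightarrow>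
      (\<forall>c\<in>set cs. \<forall>d\<in>set cs. c \<noteq> d \<longrightarrow> f c \<noteq> f d)"
      unfolding holds_with_def by (auto simp: fneg_def f_def)
    also have "\<dots> \<longleftrightarrow> inj_on f (set cs)" unfolding inj_on_def by blast
    finally show ?thesis .
  qed
  have cp: "holds_with S X (foldr FAll [0..<ar P]
                 (fiff (FAtom (Ext P) (map V [0..<ar P]))
                       (fdisj [fconj (map (\<lambda>i. FEq (V i) (Cn (t ! i))) [0..<ar P]).
                               (Q, t) \<leftarrow> D, Q = P]))) \<longleftrightarrow>
     (\<forall>u. length u = ar P \<longrightarrow> set u \<subseteq> sdom S \<longrightarrow>
        (u \<in> pint S (Ext P) \<longleftrightarrow> (\<exists>t. (P,t) \<in> set D \<and> u = map f t)))" for P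
  proof -
    have len: "length t = ar P" if "(P,t) \<in> set D" for t
      using wfdb that unfolding wf_db_def by fastforce
    have "holds_with S X (foldr FAll [0..<ar P]
                 (fiff (FAtom (Ext P) (map V [0..<ar P]))
                       (fdisj [fconj (map (\<lambda>i. FEq (V i) (Cn (t ! i))) [0..<ar P]).
                               (Q, t) \<leftarrow> D, Q = P]))) \<longleftrightarrow>
       (\<forall>\<sigma>::nat\<Rightarrow>_. range \<sigma> \<subseteq> sdom S \<longrightarrow> (map \<sigma> [0..<ar P] \<in> pint S (Ext P) \<longleftrightarrow>
           (\<exists>t. (P,t) \<in> set D \<and> (\<forall>i<ar P. \<sigma> i = f (t ! i)))))"
      unfolding holds_foldr_All fiff_def eval.simps eval_RD_disj by (simp add: f_def comp_def iff_conv_conj_imp)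
    also have "\<dots> \<longleftrightarrow> (\<forall>\<sigma>::nat\<Rightarrow>_. range \<sigma> \<subseteq> sdom S \<longrightarrow> (map \<sigma> [0..<ar P] \<in> pint S (Ext P) \<longleftrightarrow>
           (\<exists>t. (P,t) \<in> set D \<and> map \<sigma> [0..<ar P] = map f t)))"
    proof -
      have "(\<exists>t. (P,t)\<in>set D \<and> (\<forall>i<ar P. \<sigma> i = f (t!i))) \<longleftrightarrow>
            (\<exists>t. (P,t) \<in> set D \<and> map \<sigma> [0..<ar P] = map f t)" for \<sigma> :: "nat \<Rightarrow> _"
        using map_eq_nth_iff len by blast
      then show ?thesis by simp
    qed
    also have "\<dots> \<longleftrightarrow> (\<forall>u. length u = ar P \<longrightarrow> set u \<subseteq> sdom S \<longrightarrow>
        (u \<in> pint S (Ext P) \<longleftrightarrow> (\<exists>t. (P,t) \<in> set D \<and> u = map f t)))"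
      using all_tuple[OF d0, where \<Psi> = "\<lambda>u. (u \<in> pint S (Ext P) \<longleftrightarrow> (\<exists>t. (P,t) \<in> set D \<and> u = map f t))"]
      by simp
    finally show ?thesis .
  qed
  have L: "(\<forall>g\<in>set ([A,B] @ map F L). Q g) \<longleftrightarrow> Q A \<and> Q B \<and> (\<forall>x\<in>set L. Q (F x))"
    for A B F L and Q :: "_ \<Rightarrow> bool" by auto
  show ?thesis unfolding RD_def holds_fconj L dc un[unfolded holds_fconj] cp f_def ..
qed



definition gt :: "(nat \<Rightarrow> 'c) \<Rightarrow> ('p,'c) atom \<Rightarrow> 'c list" where
  "gt \<sigma> a = map (tev id \<sigma>) (snd a)"

definition sch_ok :: "'c list \<Rightarrow> ('r \<Rightarrow> nat) \<Rightarrow> 'r \<Rightarrow> (('r,'q) pn \<times> 'c list) set \<Rightarrow>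
    (('r,'q) pn \<times> 'c list) set \<Rightarrow> bool" where
  "sch_ok cs ar P M N \<longleftrightarrow> (\<forall>t. length t = ar P \<longrightarrow> set t \<subseteq> set cs \<longrightarrow>
     ((Ext P,t)\<in>N \<longrightarrow> (St P,t)\<in>N) \<and> ((Tr P,t)\<in>N \<longrightarrow> (St P,t)\<in>N) \<and>
     ((St P,t)\<in>N \<longrightarrow> (Fa P,t)\<notin>M \<longrightarrow> (SS P,t)\<in>N) \<and> \<not>((Tr P,t)\<in>N \<and> (Fa P,t)\<in>N))"

fun ic_ok :: "'c list \<Rightarrow> ('b \<Rightarrow> 'c list \<Rightarrow> bool) \<Rightarrow> ('r,'c,'b) ic \<Rightarrow> (('r,'q) pn \<times> 'c list) set \<Rightarrow>
    (('r,'q) pn \<times> 'c list) set \<Rightarrow> bool" where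
  "ic_ok cs bi (IC B H ph) M N \<longleftrightarrow>
    (\<forall>J\<in>set (subseqs [0..<length H]). \<forall>\<sigma>. range \<sigma> \<subseteq> set cs \<longrightarrow>
      (\<forall>a\<in>set B. (St (fst a), gt \<sigma> a)\<in>N) \<longrightarrow>
      (\<forall>j\<in>set J. (Fa (fst (H!j)), gt \<sigma> (H!j))\<in>N) \<longrightarrow>
      (\<forall>k<length H. k\<notin>set J \<longrightarrow> (Ext (fst (H!k)), gt \<sigma> (H!k))\<notin>M) \<longrightarrow>
      \<not>(\<exists>(pl,b,ts)\<in>set ph. bi b (map (tev id \<sigma>) ts) = pl) \<longrightarrow>
      (\<exists>a\<in>set B. (Fa (fst a), gt \<sigma> a)\<in>N) \<or> (\<exists>a\<in>set H. (Tr (fst a), gt \<sigma> a)\<in>N))"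

lemma gatom_mapp[simp]: "gatom \<sigma> (mapp g a) = (g (fst a), gt \<sigma> a)"
  by (simp add: gatom_def mapp_def gt_def)

lemma gatom_pair: "gatom \<sigma> (p, map V [0..<n]) = (p, map \<sigma> [0..<n])"
  by (simp add: gatom_def)

lemma sch_rsat:
  assumes "cs \<noteq> []"
  shows "(\<forall>r\<in>set (schema_rules ar P). \<forall>\<sigma>. range \<sigma> \<subseteq> set cs \<longrightarrow> rsat cs bi r M N \<sigma>) \<longleftrightarrow>
         sch_ok cs ar P M N"
proof -
  obtain c0 where c0: "c0 \<in> set cs" using assms by (cases cs) auto
  have "(\<forall>r\<in>set (schema_rules ar P). \<forall>\<sigma>. range \<sigma> \<subseteq> set cs \<longrightarrow> rsat cs bi r M N \<sigma>) \<longleftrightarrow>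
    (\<forall>\<sigma>::nat\<Rightarrow>_. range \<sigma> \<subseteq> set cs \<longrightarrow> (\<lambda>t.
     ((Ext P,t)\<in>N \<longrightarrow> (St P,t)\<in>N) \<and> ((Tr P,t)\<in>N \<longrightarrow> (St P,t)\<in>N) \<and>
     ((St P,t)\<in>N \<longrightarrow> (Fa P,t)\<notin>M \<longrightarrow> (SS P,t)\<in>N) \<and> \<not>((Tr P,t)\<in>N \<and> (Fa P,t)\<in>N)) (map \<sigma> [0..<ar P]))"
    unfolding schema_rules_def Let_def rsat_def by (auto simp: gatom_pair bis_true_def)
  also have "\<dots> \<longleftrightarrow> sch_ok cs ar P M N"
    unfolding sch_ok_def
    using all_tuple[OF c0, where n="ar P" and \<Psi>="\<lambda>t.
     ((Ext P,t)\<in>N \<longrightarrow> (St P,t)\<in>N) \<and> ((Tr P,t)\<in>N \<longrightarrow> (St P,t)\<in>N) \<and>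
     ((St P,t)\<in>N \<longrightarrow> (Fa P,t)\<notin>M \<longrightarrow> (SS P,t)\<in>N) \<and> \<not>((Tr P,t)\<in>N \<and> (Fa P,t)\<in>N)"]
    by simp
  finally show ?thesis .
qed

lemma filter_subseqs: "filter P xs \<in> set (subseqs xs)"
  by (induction xs) (auto simp: Let_def)

lemma subseqs_set: "J \<in> set (subseqs xs) \<Longrightarrow> set J \<subseteq> set xs"
  using subseqs_powset[of xs] by blast

lemma ic_rsat:
  "(\<forall>r\<in>set (ic_rules ic). \<forall>\<sigma>. range \<sigma> \<subseteq> set cs \<longrightarrow> rsat cs bi r M N \<sigma>) \<longleftrightarrow> ic_ok cs bi ic M N"
proof (cases ic)
  case (IC B H ph)
  have bis: "bis_true bi \<sigma> (map (\<lambda>(pl,b,ts). (\<not> pl, b, ts)) ph) \<longleftrightarrow>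
     \<not>(\<exists>(pl,b,ts)\<in>set ph. bi b (map (tev id \<sigma>) ts) = pl)" for \<sigma>
    unfolding bis_true_def by auto
  have neg: "(\<forall>a\<in>set (map (\<lambda>k. mapp Ext (H ! k)) (filter (\<lambda>k. k \<notin> set J) [0..<length H])).
        gatom \<sigma> a \<notin> M) \<longleftrightarrow> (\<forall>k<length H. k\<notin>set J \<longrightarrow> (Ext (fst (H!k)), gt \<sigma> (H!k))\<notin>M)" for \<sigma> J
    by auto
  have per: "rsat cs bi (Rule (map (mapp Fa) B @ map (mapp Tr) H)
                   (map (mapp St) B @ map (\<lambda>j. mapp Fa (H ! j)) J)
                   (map (\<lambda>k. mapp Ext (H ! k)) (filter (\<lambda>k. k \<notin> set J) [0..<length H]))
                   (map (\<lambda>(pl,b,ts). (\<not> pl, b, ts)) ph)) M N \<sigma> \<longleftrightarrow>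
      ((\<forall>a\<in>set B. (St (fst a), gt \<sigma> a)\<in>N) \<longrightarrow>
      (\<forall>j\<in>set J. (Fa (fst (H!j)), gt \<sigma> (H!j))\<in>N) \<longrightarrow>
      (\<forall>k<length H. k\<notin>set J \<longrightarrow> (Ext (fst (H!k)), gt \<sigma> (H!k))\<notin>M) \<longrightarrow>
      \<not>(\<exists>(pl,b,ts)\<in>set ph. bi b (map (tev id \<sigma>) ts) = pl) \<longrightarrow>
      (\<exists>a\<in>set B. (Fa (fst a), gt \<sigma> a)\<in>N) \<or> (\<exists>a\<in>set H. (Tr (fst a), gt \<sigma> a)\<in>N))" for J \<sigma>
    unfolding rsat_def rule.sel bis neg set_append ball_Un bex_Un set_map Ball_image_comp Bex_image_comp
      Ball_comp Bex_comp gatom_mapp by auto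
  show ?thesis unfolding IC ic_rules.simps ic_ok.simps set_map Ball_image_comp Ball_comp per ..
qed



lemma reduct_repair:
  assumes "cs \<noteq> []"
  shows "reduct_model cs bi (repair_prog Sch ar ics) M N \<longleftrightarrow>
    (\<forall>ic\<in>set ics. ic_ok cs bi ic M N) \<and> (\<forall>P\<in>set Sch. sch_ok cs ar P M N)"
proof -
  have "reduct_model cs bi (repair_prog Sch ar ics) M N \<longleftrightarrow>
    (\<forall>ic\<in>set ics. \<forall>r\<in>set (ic_rules ic). \<forall>\<sigma>. range \<sigma> \<subseteq> set cs \<longrightarrow> rsat cs bi r M N \<sigma>) \<and>
    (\<forall>P\<in>set Sch. \<forall>r\<in>set (schema_rules ar P). \<forall>\<sigma>. range \<sigma> \<subseteq> set cs \<longrightarrow> rsat cs bi r M N \<sigma>)"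
    unfolding reduct_model_rsat repair_prog_def by auto
  then show ?thesis using ic_rsat[of _ cs bi M N] sch_rsat[OF assms, of ar _ bi M N] by simp
qed

lemma rp_simps[simp]:
  "Ext P \<notin> repair_preds Sch" "Qp q \<notin> repair_preds Sch"
  "Tr P \<in> repair_preds Sch \<longleftrightarrow> P \<in> set Sch" "Fa P \<in> repair_preds Sch \<longleftrightarrow> P \<in> set Sch"
  "St P \<in> repair_preds Sch \<longleftrightarrow> P \<in> set Sch" "SS P \<in> repair_preds Sch \<longleftrightarrow> P \<in> set Sch"
  by (auto simp: repair_preds_def)

definition canon :: "'r list \<Rightarrow> ('r \<times> 'c list) set \<Rightarrow> (('r,'q) pn \<times> 'c list) set \<Rightarrow>
   ('r \<times> 'c list) set \<Rightarrow> ('r \<times> 'c list) set \<Rightarrow> (('r,'q) pn \<times> 'c list) set" where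
  "canon Sch D0 M T F = {x\<in>M. fst x \<notin> repair_preds Sch} \<union>
     {(Tr P,t)|P t. P\<in>set Sch \<and> (P,t)\<in>T} \<union> {(Fa P,t)|P t. P\<in>set Sch \<and> (P,t)\<in>F} \<union>
     {(St P,t)|P t. P\<in>set Sch \<and> ((P,t)\<in>D0 \<or> (P,t)\<in>T)} \<union>
     {(SS P,t)|P t. P\<in>set Sch \<and> ((P,t)\<in>D0 \<or> (P,t)\<in>T) \<and> (Fa P,t)\<notin>M}"

lemma canon_mem[simp]:
  "(Ext P,t) \<in> canon Sch D0 M T F \<longleftrightarrow> (Ext P,t) \<in> M"
  "(Qp q,t) \<in> canon Sch D0 M T F \<longleftrightarrow> (Qp q,t) \<in> M"
  "(Tr P,t) \<in> canon Sch D0 M T F \<longleftrightarrow> (if P \<in> set Sch then (P,t)\<in>T else (Tr P,t)\<in>M)"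
  "(Fa P,t) \<in> canon Sch D0 M T F \<longleftrightarrow> (if P \<in> set Sch then (P,t)\<in>F else (Fa P,t)\<in>M)"
  "(St P,t) \<in> canon Sch D0 M T F \<longleftrightarrow> (if P \<in> set Sch then (P,t)\<in>D0 \<or> (P,t)\<in>T else (St P,t)\<in>M)"
  "(SS P,t) \<in> canon Sch D0 M T F \<longleftrightarrow>
     (if P \<in> set Sch then ((P,t)\<in>D0 \<or> (P,t)\<in>T) \<and> (Fa P,t)\<notin>M else (SS P,t)\<in>M)"
  by (auto simp: canon_def)

lemma canon_agree: "\<forall>x\<in>M. fst x \<notin> repair_preds Sch \<longrightarrow> x \<in> canon Sch D0 M T F"
  by (auto simp: canon_def)

lemma canon_sub:
  assumes ext: "\<forall>P\<in>set Sch. \<forall>t. (Ext P,t)\<in>M \<longleftrightarrow> (P,t)\<in>D0"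
    and D0wf: "\<forall>(P,t)\<in>D0. P\<in>set Sch \<and> length t = ar P \<and> set t \<subseteq> set cs"
    and schM: "\<forall>P\<in>set Sch. sch_ok cs ar P M M"
    and TM: "\<forall>(P,t)\<in>T. (Tr P,t)\<in>M \<and> length t = ar P \<and> set t \<subseteq> set cs"
    and FM: "\<forall>(P,t)\<in>F. (Fa P,t)\<in>M"
  shows "canon Sch D0 M T F \<subseteq> M"
proof
  fix x assume x: "x \<in> canon Sch D0 M T F"
  have St: "(St P,t) \<in> M" if "P\<in>set Sch" "(P,t)\<in>D0 \<or> (P,t)\<in>T" for P t
  proof (cases "(P,t)\<in>D0")
    case True
    then have "(Ext P,t)\<in>M" "length t = ar P" "set t \<subseteq> set cs" using ext D0wf that by auto
    then show ?thesis using schM that unfolding sch_ok_def by blast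
  next
    case False
    then have "(Tr P,t)\<in>M" "length t = ar P" "set t \<subseteq> set cs" using TM that by auto
    then show ?thesis using schM that unfolding sch_ok_def by blast
  qed
  have SS: "(SS P,t) \<in> M" if "P\<in>set Sch" "(P,t)\<in>D0 \<or> (P,t)\<in>T" "(Fa P,t)\<notin>M" for P t
  proof -
    have "length t = ar P \<and> set t \<subseteq> set cs" using that D0wf TM by auto
    then show ?thesis using St[OF that(1,2)] that schM unfolding sch_ok_def by blast
  qed
  show "x \<in> M" using x TM FM St SS unfolding canon_def by auto
qed

lemma canon_sch:
  assumes ext: "\<forall>P\<in>set Sch. \<forall>t. (Ext P,t)\<in>M \<longleftrightarrow> (P,t)\<in>D0"
    and TD: "T \<inter> D0 = {}" and FD: "F \<subseteq> D0"
  shows "\<forall>P\<in>set Sch. sch_ok cs ar P M (canon Sch D0 M T F)"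
  using ext TD FD unfolding sch_ok_def by auto

lemma gt_props:
  assumes "wf_ic Sch ar cs (IC B H ph)" "a \<in> set B \<or> a \<in> set H" "range \<sigma> \<subseteq> set cs"
  shows "fst a \<in> set Sch" "length (gt \<sigma> a) = ar (fst a)" "set (gt \<sigma> a) \<subseteq> set cs"
proof -
  have a: "fst a \<in> set Sch \<and> length (snd a) = ar (fst a) \<and> atom_consts a \<subseteq> set cs"
    using assms(1,2) by auto
  then show "fst a \<in> set Sch" "length (gt \<sigma> a) = ar (fst a)" by (auto simp: gt_def)
  show "set (gt \<sigma> a) \<subseteq> set cs" unfolding gt_def
    using tev_in[OF assms(3) atom_consts_sub] a by blast
qed



lemma ic_sat_gt:
  "ic_sat cs bi I (IC B H ph) \<longleftrightarrow>
     (\<forall>\<sigma>. range \<sigma> \<subseteq> set cs \<longrightarrow> (\<forall>a\<in>set B. (fst a, gt \<sigma> a) \<in> I) \<longrightarrow>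
        (\<exists>a\<in>set H. (fst a, gt \<sigma> a) \<in> I) \<or>
        (\<exists>(pl,b,ts)\<in>set ph. bi b (map (tev id \<sigma>) ts) = pl))"
  by (simp add: gt_def case_prod_beta')

lemma in_set_nth_ex: "a \<in> set H \<Longrightarrow> \<exists>j<length H. a = H ! j"
  by (metis in_set_conv_nth)

lemma rep1:
  assumes cs: "cs \<noteq> []"
    and D0wf: "\<forall>(P,t)\<in>D0. P\<in>set Sch \<and> length t = ar P \<and> set t \<subseteq> set cs"
    and icwf: "\<forall>ic\<in>set ics. wf_ic Sch ar cs ic"
    and ext: "\<forall>P\<in>set Sch. \<forall>t. (Ext P,t)\<in>M \<longleftrightarrow> (P,t)\<in>D0"
    and Mcs: "\<forall>x\<in>M. set (snd x) \<subseteq> set cs"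
    and Mlen: "\<forall>P t. (Tr P,t)\<in>M \<or> (SS P,t)\<in>M \<longrightarrow> length t = ar P"
    and smin: "so_min cs bi (repair_prog Sch ar ics) (repair_preds Sch) M"
  shows "is_repair Sch ar cs bi ics D0 {(P,t). P\<in>set Sch \<and> (SS P,t)\<in>M}"
proof -
  have RMM: "reduct_model cs bi (repair_prog Sch ar ics) M M"
    and nomin: "\<not> (\<exists>N. N \<subset> M \<and> (\<forall>x\<in>M. fst x \<notin> repair_preds Sch \<longrightarrow> x \<in> N) \<and>
        reduct_model cs bi (repair_prog Sch ar ics) M N)"
    using smin unfolding so_min_def by blast+
  have icM: "\<forall>ic\<in>set ics. ic_ok cs bi ic M M" and schM: "\<forall>P\<in>set Sch. sch_ok cs ar P M M"
    using RMM unfolding reduct_repair[OF cs] by blast+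
  have noTF: "\<not> ((Tr P,t)\<in>M \<and> (Fa P,t)\<in>M)" if "P \<in> set Sch" for P t
  proof
    assume h: "(Tr P,t)\<in>M \<and> (Fa P,t)\<in>M"
    then have "length t = ar P" "set t \<subseteq> set cs" using Mlen Mcs by force+
    then show False using schM that h unfolding sch_ok_def by blast
  qed
  define T where "T = {(P,t). (Tr P,t)\<in>M \<and> (P,t)\<notin>D0}"
  define F where "F = {(P,t). (Fa P,t)\<in>M \<and> (P,t)\<in>D0}"
  define N where "N = canon Sch D0 M T F"
  have NM: "N \<subseteq> M" unfolding N_def
    by (rule canon_sub[OF ext D0wf schM]) (use Mlen Mcs in \<open>force simp: T_def F_def\<close>)+
  have schN: "\<forall>P\<in>set Sch. sch_ok cs ar P M N" unfolding N_def
    by (rule canon_sch[OF ext]) (auto simp: T_def F_def)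
  have icN: "\<forall>ic\<in>set ics. ic_ok cs bi ic M N"
  proof
    fix ic assume ic: "ic \<in> set ics"
    obtain B H ph where icd: "ic = IC B H ph" by (cases ic)
    have wf: "wf_ic Sch ar cs (IC B H ph)" using icwf ic icd by blast
    have okM: "ic_ok cs bi (IC B H ph) M M" using icM ic icd by blast
    show "ic_ok cs bi ic M N" unfolding icd ic_ok.simps
    proof (intro ballI allI impI)
      fix J \<sigma> assume J: "J \<in> set (subseqs [0..<length H])" and \<sigma>: "range \<sigma> \<subseteq> set cs"
        and bB: "\<forall>a\<in>set B. (St (fst a), gt \<sigma> a) \<in> N"
        and bJ: "\<forall>j\<in>set J. (Fa (fst (H ! j)), gt \<sigma> (H ! j)) \<in> N"
        and bK: "\<forall>k<length H. k \<notin> set J \<longrightarrow> (Ext (fst (H ! k)), gt \<sigma> (H ! k)) \<notin> M"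
        and bph: "\<not> (\<exists>(pl, b, ts)\<in>set ph. bi b (map (tev id \<sigma>) ts) = pl)"
      have "(\<exists>a\<in>set B. (Fa (fst a), gt \<sigma> a)\<in>M) \<or> (\<exists>a\<in>set H. (Tr (fst a), gt \<sigma> a)\<in>M)"
        using okM J \<sigma> bB bJ bK bph NM unfolding ic_ok.simps by blast
      then show "(\<exists>a\<in>set B. (Fa (fst a), gt \<sigma> a)\<in>N) \<or> (\<exists>a\<in>set H. (Tr (fst a), gt \<sigma> a)\<in>N)"
      proof
        assume "\<exists>a\<in>set B. (Fa (fst a), gt \<sigma> a)\<in>M"
        then obtain a where a: "a \<in> set B" "(Fa (fst a), gt \<sigma> a)\<in>M" by blast
        have P: "fst a \<in> set Sch" using gt_props[OF wf _ \<sigma>] a by blast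
        have "(St (fst a), gt \<sigma> a) \<in> N" using bB a by blast
        then have "(fst a, gt \<sigma> a) \<in> D0 \<or> (fst a, gt \<sigma> a) \<in> T" using P by (simp add: N_def)
        then have "(fst a, gt \<sigma> a) \<in> F" using noTF[OF P] a by (auto simp: T_def F_def)
        then show ?thesis using a P by (auto simp: N_def)
      next
        assume "\<exists>a\<in>set H. (Tr (fst a), gt \<sigma> a)\<in>M"
        then obtain a where a: "a \<in> set H" "(Tr (fst a), gt \<sigma> a)\<in>M" by blast
        obtain j where j: "j < length H" "a = H ! j" using in_set_nth_ex[OF a(1)] by blast
        have P: "fst a \<in> set Sch" using gt_props[OF wf _ \<sigma>] a by blast
        have "(fst a, gt \<sigma> a) \<notin> D0"
        proof
          assume D: "(fst a, gt \<sigma> a) \<in> D0"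
          show False
          proof (cases "j \<in> set J")
            case True
            then have "(Fa (fst a), gt \<sigma> a) \<in> M" using bJ j NM by blast
            then show False using noTF[OF P] a by blast
          next
            case False
            then have "(Ext (fst a), gt \<sigma> a) \<notin> M" using bK j by blast
            then show False using ext P D by blast
          qed
        qed
        then show ?thesis using a P by (auto simp: N_def T_def)
      qed
    qed
  qed
  have rN: "reduct_model cs bi (repair_prog Sch ar ics) M N"
    unfolding reduct_repair[OF cs] using icN schN by blast
  have NeqM: "N = M"
    using nomin NM rN canon_agree[of M Sch D0 T F] unfolding N_def by blast
  have memN: "x \<in> M \<longleftrightarrow> x \<in> N" for x using NeqM by simp
  have Tm: "(P,t) \<in> T \<longleftrightarrow> (Tr P,t)\<in>M \<and> (P,t)\<notin>D0" for P t by (simp add: T_def)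
  have Fm: "(P,t) \<in> F \<longleftrightarrow> (Fa P,t)\<in>M \<and> (P,t)\<in>D0" for P t by (simp add: F_def)
  have cT: "(P,t) \<notin> D0" if "P\<in>set Sch" "(Tr P,t)\<in>M" for P t
  proof -
    have "(Tr P,t) \<in> N" using memN that by blast
    then have "(P,t) \<in> T" using that(1) by (simp add: N_def)
    then show ?thesis using Tm by blast
  qed
  have cF: "(P,t) \<in> D0" if "P\<in>set Sch" "(Fa P,t)\<in>M" for P t
  proof -
    have "(Fa P,t) \<in> N" using memN that by blast
    then have "(P,t) \<in> F" using that(1) by (simp add: N_def)
    then show ?thesis using Fm by blast
  qed
  have cSS: "(SS P,t)\<in>M \<longleftrightarrow> ((P,t)\<in>D0 \<or> (Tr P,t)\<in>M) \<and> (Fa P,t)\<notin>M" if "P\<in>set Sch" for P t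
  proof -
    have "(SS P,t)\<in>M \<longleftrightarrow> (SS P,t)\<in>N" using memN by blast
    also have "\<dots> \<longleftrightarrow> ((P,t)\<in>D0 \<or> (P,t)\<in>T) \<and> (Fa P,t)\<notin>M" using that by (simp add: N_def)
    finally show ?thesis using Tm by blast
  qed
  have cSt: "(St P,t)\<in>M \<longleftrightarrow> (P,t)\<in>D0 \<or> (Tr P,t)\<in>M" if "P\<in>set Sch" for P t
  proof -
    have "(St P,t)\<in>M \<longleftrightarrow> (St P,t)\<in>N" using memN by blast
    also have "\<dots> \<longleftrightarrow> (P,t)\<in>D0 \<or> (P,t)\<in>T" using that by (simp add: N_def)
    finally show ?thesis using Tm by blast
  qed
  define D' where "D' = {(P,t). P\<in>set Sch \<and> (SS P,t)\<in>M}"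
  have inst: "instance_over Sch ar cs D'"
    unfolding instance_over_def D'_def using Mlen Mcs by force
  have sat: "satisfies_ics cs bi ics D'"
    unfolding satisfies_ics_def
  proof
    fix ic assume ic: "ic \<in> set ics"
    obtain B H ph where icd: "ic = IC B H ph" by (cases ic)
    have wf: "wf_ic Sch ar cs (IC B H ph)" using icwf ic icd by blast
    have okM: "ic_ok cs bi (IC B H ph) M M" using icM ic icd by blast
    show "ic_sat cs bi D' ic" unfolding icd ic_sat_gt
    proof (intro allI impI)
      fix \<sigma> assume \<sigma>: "range \<sigma> \<subseteq> set cs" and bB: "\<forall>a\<in>set B. (fst a, gt \<sigma> a) \<in> D'"
      show "(\<exists>a\<in>set H. (fst a, gt \<sigma> a) \<in> D') \<or> (\<exists>(pl,b,ts)\<in>set ph. bi b (map (tev id \<sigma>) ts) = pl)"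
      proof (rule ccontr)
        assume nh: "\<not> ?thesis"
        define J where "J = filter (\<lambda>j. (fst (H!j), gt \<sigma> (H!j)) \<in> D0) [0..<length H]"
        have J: "J \<in> set (subseqs [0..<length H])" unfolding J_def by (rule filter_subseqs)
        have PB: "fst a \<in> set Sch" if "a \<in> set B" for a using gt_props[OF wf _ \<sigma>] that by blast
        have PH: "fst a \<in> set Sch" if "a \<in> set H" for a using gt_props[OF wf _ \<sigma>] that by blast
        have b1: "\<forall>a\<in>set B. (St (fst a), gt \<sigma> a)\<in>M"
          using bB cSt cSS PB unfolding D'_def by blast
        have b2: "\<forall>j\<in>set J. (Fa (fst (H ! j)), gt \<sigma> (H ! j)) \<in> M"
        proof
          fix j assume "j \<in> set J"
          then have j: "j < length H" "(fst (H!j), gt \<sigma> (H!j)) \<in> D0" unfolding J_def by auto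
          have P: "fst (H!j) \<in> set Sch" using PH j(1) by simp
          have "(fst (H!j), gt \<sigma> (H!j)) \<notin> D'" using nh j(1) by (meson nth_mem)
          then show "(Fa (fst (H ! j)), gt \<sigma> (H ! j)) \<in> M" using cSS[OF P] j P unfolding D'_def by blast
        qed
        have b3: "\<forall>k<length H. k \<notin> set J \<longrightarrow> (Ext (fst (H ! k)), gt \<sigma> (H ! k)) \<notin> M"
          using ext PH unfolding J_def by auto
        have b4: "\<not> (\<exists>(pl, b, ts)\<in>set ph. bi b (map (tev id \<sigma>) ts) = pl)" using nh by blast
        have "(\<exists>a\<in>set B. (Fa (fst a), gt \<sigma> a)\<in>M) \<or> (\<exists>a\<in>set H. (Tr (fst a), gt \<sigma> a)\<in>M)"
          using okM J \<sigma> b1 b2 b3 b4 unfolding ic_ok.simps by blast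
        then show False
        proof
          assume "\<exists>a\<in>set B. (Fa (fst a), gt \<sigma> a)\<in>M"
          then obtain a where a: "a\<in>set B" "(Fa (fst a), gt \<sigma> a)\<in>M" by blast
          then show False using bB cSS PB unfolding D'_def by blast
        next
          assume "\<exists>a\<in>set H. (Tr (fst a), gt \<sigma> a)\<in>M"
          then obtain a where a: "a\<in>set H" "(Tr (fst a), gt \<sigma> a)\<in>M" by blast
          have P: "fst a \<in> set Sch" using PH a by blast
          have "(Fa (fst a), gt \<sigma> a) \<notin> M" using cT[OF P] cF[OF P] a by blast
          then have "(fst a, gt \<sigma> a) \<in> D'" using cSS[OF P] a P unfolding D'_def by blast
          then show False using nh a by blast
        qed
      qed
    qed
  qed
  have minimal: "\<not> (\<exists>D''. instance_over Sch ar cs D'' \<and> satisfies_ics cs bi ics D'' \<and>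
              symdiff D0 D'' \<subset> symdiff D0 D')"
  proof
    assume "\<exists>D''. instance_over Sch ar cs D'' \<and> satisfies_ics cs bi ics D'' \<and>
              symdiff D0 D'' \<subset> symdiff D0 D'"
    then obtain D'' where i2: "instance_over Sch ar cs D''" and s2: "satisfies_ics cs bi ics D''"
      and lt: "symdiff D0 D'' \<subset> symdiff D0 D'" by blast
    define T2 where "T2 = D'' - D0"
    define F2 where "F2 = D0 - D''"
    define N2 where "N2 = canon Sch D0 M T2 F2"
    have i2': "P \<in> set Sch \<and> length t = ar P \<and> set t \<subseteq> set cs" if "(P,t)\<in>D''" for P t
      using i2 that unfolding instance_over_def by blast
    have TM: "\<forall>(P,t)\<in>T2. (Tr P,t)\<in>M \<and> length t = ar P \<and> set t \<subseteq> set cs"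
    proof (intro ballI, clarify)
      fix P t assume "(P,t) \<in> T2"
      then have "(P,t) \<in> symdiff D0 D''" "(P,t) \<in> D''" "(P,t)\<notin>D0" by (auto simp: T2_def symdiff_def)
      then have "(P,t) \<in> D'" using lt by (auto simp: symdiff_def)
      then show "(Tr P,t)\<in>M \<and> length t = ar P \<and> set t \<subseteq> set cs"
        using cSS \<open>(P,t)\<notin>D0\<close> i2' \<open>(P,t) \<in> D''\<close> unfolding D'_def by blast
    qed
    have FM: "\<forall>(P,t)\<in>F2. (Fa P,t)\<in>M"
    proof (intro ballI, clarify)
      fix P t assume "(P,t) \<in> F2"
      then have "(P,t) \<in> symdiff D0 D''" "(P,t) \<in> D0" by (auto simp: F2_def symdiff_def)
      then have "(P,t) \<notin> D'" "(P,t) \<in> D0" using lt by (auto simp: symdiff_def)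
      moreover have "P \<in> set Sch" using D0wf \<open>(P,t) \<in> D0\<close> by blast
      ultimately show "(Fa P,t)\<in>M" using cSS unfolding D'_def by blast
    qed
    have N2M: "N2 \<subseteq> M" unfolding N2_def by (rule canon_sub[OF ext D0wf schM TM FM])
    have schN2: "\<forall>P\<in>set Sch. sch_ok cs ar P M N2" unfolding N2_def
      by (rule canon_sch[OF ext]) (auto simp: T2_def F2_def)
    have icN2: "\<forall>ic\<in>set ics. ic_ok cs bi ic M N2"
    proof
      fix ic assume ic: "ic \<in> set ics"
      obtain B H ph where icd: "ic = IC B H ph" by (cases ic)
      have wf: "wf_ic Sch ar cs (IC B H ph)" using icwf ic icd by blast
      have sat2: "ic_sat cs bi D'' (IC B H ph)" using s2 ic icd unfolding satisfies_ics_def by blast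
      show "ic_ok cs bi ic M N2" unfolding icd ic_ok.simps
      proof (intro ballI allI impI)
        fix J \<sigma> assume J: "J \<in> set (subseqs [0..<length H])" and \<sigma>: "range \<sigma> \<subseteq> set cs"
          and bB: "\<forall>a\<in>set B. (St (fst a), gt \<sigma> a) \<in> N2"
          and bJ: "\<forall>j\<in>set J. (Fa (fst (H ! j)), gt \<sigma> (H ! j)) \<in> N2"
          and bK: "\<forall>k<length H. k \<notin> set J \<longrightarrow> (Ext (fst (H ! k)), gt \<sigma> (H ! k)) \<notin> M"
          and bph: "\<not> (\<exists>(pl, b, ts)\<in>set ph. bi b (map (tev id \<sigma>) ts) = pl)"
        have PB: "fst a \<in> set Sch" if "a \<in> set B" for a using gt_props[OF wf _ \<sigma>] that by blast
        have PH: "fst a \<in> set Sch" if "a \<in> set H" for a using gt_props[OF wf _ \<sigma>] that by blast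
        have "(\<forall>a\<in>set B. (fst a, gt \<sigma> a) \<in> D'') \<longrightarrow> (\<exists>a\<in>set H. (fst a, gt \<sigma> a) \<in> D'')"
          using sat2 \<sigma> bph unfolding ic_sat_gt by blast
        then have "(\<exists>a\<in>set B. (fst a, gt \<sigma> a) \<notin> D'') \<or> (\<exists>a\<in>set H. (fst a, gt \<sigma> a) \<in> D'')"
          by blast
        then show "(\<exists>a\<in>set B. (Fa (fst a), gt \<sigma> a)\<in>N2) \<or> (\<exists>a\<in>set H. (Tr (fst a), gt \<sigma> a)\<in>N2)"
        proof
          assume "\<exists>a\<in>set B. (fst a, gt \<sigma> a) \<notin> D''"
          then obtain a where a: "a \<in> set B" "(fst a, gt \<sigma> a) \<notin> D''" by blast
          have P: "fst a \<in> set Sch" using PB a by blast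
          have "(St (fst a), gt \<sigma> a) \<in> N2" using bB a by blast
          then have "(fst a, gt \<sigma> a) \<in> D0" using P a by (auto simp: N2_def T2_def)
          then have "(Fa (fst a), gt \<sigma> a) \<in> N2" using P a by (auto simp: N2_def F2_def)
          then show ?thesis using a by blast
        next
          assume "\<exists>a\<in>set H. (fst a, gt \<sigma> a) \<in> D''"
          then obtain a where a: "a \<in> set H" "(fst a, gt \<sigma> a) \<in> D''" by blast
          obtain j where j: "j < length H" "a = H ! j" using in_set_nth_ex[OF a(1)] by blast
          have P: "fst a \<in> set Sch" using PH a by blast
          show ?thesis
          proof (cases "j \<in> set J")
            case True
            then have "(Fa (fst a), gt \<sigma> a) \<in> N2" using bJ j by blast
            then show ?thesis using P a by (auto simp: N2_def F2_def)
          next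
            case False
            then have "(Ext (fst a), gt \<sigma> a) \<notin> M" using bK j by blast
            then have "(fst a, gt \<sigma> a) \<notin> D0" using ext P by blast
            then have "(Tr (fst a), gt \<sigma> a) \<in> N2" using P a by (auto simp: N2_def T2_def)
            then show ?thesis using a by blast
          qed
        qed
      qed
    qed
    have rN2: "reduct_model cs bi (repair_prog Sch ar ics) M N2"
      unfolding reduct_repair[OF cs] using icN2 schN2 by blast
    obtain x where x: "x \<in> symdiff D0 D'" "x \<notin> symdiff D0 D''" using lt by blast
    obtain P t where xpt: "x = (P,t)" by (cases x)
    have "N2 \<noteq> M"
    proof (cases "x \<in> D0")
      case True
      then have P: "P \<in> set Sch" using D0wf xpt by blast
      have "x \<notin> D'" "x \<in> D''" using x True by (auto simp: symdiff_def)
      then have "(SS P,t) \<notin> M" "(P,t) \<in> D0" using P True xpt unfolding D'_def by auto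
      then have "(Fa P,t) \<in> M" using cSS[OF P] by blast
      moreover have "(Fa P,t) \<notin> N2" using \<open>x \<in> D''\<close> P xpt by (auto simp: N2_def F2_def)
      ultimately show ?thesis by blast
    next
      case False
      have "x \<in> D'" "x \<notin> D''" using x False by (auto simp: symdiff_def)
      then have P: "P \<in> set Sch" and "(SS P,t) \<in> M" "(P,t) \<notin> D0" using False xpt unfolding D'_def by auto
      then have "(Tr P,t) \<in> M" using cSS[OF P] by blast
      moreover have "(Tr P,t) \<notin> N2" using \<open>x \<notin> D''\<close> P xpt by (auto simp: N2_def T2_def)
      ultimately show ?thesis by blast
    qed
    then show False using nomin N2M rN2 canon_agree[of M Sch D0 T2 F2] unfolding N2_def by blast
  qed
  show ?thesis unfolding is_repair_def D'_def[symmetric] using inst sat minimal by blast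
qed



lemma rep2:
  assumes cs: "cs \<noteq> []"
    and D0wf: "\<forall>(P,t)\<in>D0. P\<in>set Sch \<and> length t = ar P \<and> set t \<subseteq> set cs"
    and icwf: "\<forall>ic\<in>set ics. wf_ic Sch ar cs ic"
    and ext: "\<forall>P\<in>set Sch. \<forall>t. (Ext P,t)\<in>M \<longleftrightarrow> (P,t)\<in>D0"
    and rep: "is_repair Sch ar cs bi ics D0 D'"
    and can: "\<forall>P\<in>set Sch. \<forall>t. ((Tr P,t)\<in>M \<longleftrightarrow> (P,t)\<in>D' \<and> (P,t)\<notin>D0) \<and>
        ((Fa P,t)\<in>M \<longleftrightarrow> (P,t)\<in>D0 \<and> (P,t)\<notin>D') \<and>
        ((St P,t)\<in>M \<longleftrightarrow> (P,t)\<in>D0 \<or> (P,t)\<in>D') \<and> ((SS P,t)\<in>M \<longleftrightarrow> (P,t)\<in>D')"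
  shows "so_min cs bi (repair_prog Sch ar ics) (repair_preds Sch) M"
proof -
  have instD': "instance_over Sch ar cs D'" and satD': "satisfies_ics cs bi ics D'"
    and minD': "\<not> (\<exists>D''. instance_over Sch ar cs D'' \<and> satisfies_ics cs bi ics D'' \<and>
              symdiff D0 D'' \<subset> symdiff D0 D')"
    using rep unfolding is_repair_def by blast+
  have D'wf: "P\<in>set Sch \<and> length t = ar P \<and> set t \<subseteq> set cs" if "(P,t)\<in>D'" for P t
    using instD' that unfolding instance_over_def by blast
  have schM: "\<forall>P\<in>set Sch. sch_ok cs ar P M M"
    unfolding sch_ok_def using can ext by auto
  have icM: "\<forall>ic\<in>set ics. ic_ok cs bi ic M M"
  proof
    fix ic assume ic: "ic \<in> set ics"
    obtain B H ph where icd: "ic = IC B H ph" by (cases ic)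
    have wf: "wf_ic Sch ar cs (IC B H ph)" using icwf ic icd by blast
    have sat: "ic_sat cs bi D' (IC B H ph)" using satD' ic icd unfolding satisfies_ics_def by blast
    show "ic_ok cs bi ic M M" unfolding icd ic_ok.simps
    proof (intro ballI allI impI)
      fix J \<sigma> assume J: "J \<in> set (subseqs [0..<length H])" and \<sigma>: "range \<sigma> \<subseteq> set cs"
        and bB: "\<forall>a\<in>set B. (St (fst a), gt \<sigma> a) \<in> M"
        and bJ: "\<forall>j\<in>set J. (Fa (fst (H ! j)), gt \<sigma> (H ! j)) \<in> M"
        and bK: "\<forall>k<length H. k \<notin> set J \<longrightarrow> (Ext (fst (H ! k)), gt \<sigma> (H ! k)) \<notin> M"
        and bph: "\<not> (\<exists>(pl, b, ts)\<in>set ph. bi b (map (tev id \<sigma>) ts) = pl)"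
      have PB: "fst a \<in> set Sch" if "a \<in> set B" for a using gt_props[OF wf _ \<sigma>] that by blast
      have PH: "fst a \<in> set Sch" if "a \<in> set H" for a using gt_props[OF wf _ \<sigma>] that by blast
      have "(\<exists>a\<in>set B. (fst a, gt \<sigma> a) \<notin> D') \<or> (\<exists>a\<in>set H. (fst a, gt \<sigma> a) \<in> D')"
        using sat \<sigma> bph unfolding ic_sat_gt by blast
      then show "(\<exists>a\<in>set B. (Fa (fst a), gt \<sigma> a)\<in>M) \<or> (\<exists>a\<in>set H. (Tr (fst a), gt \<sigma> a)\<in>M)"
      proof
        assume "\<exists>a\<in>set B. (fst a, gt \<sigma> a) \<notin> D'"
        then obtain a where a: "a \<in> set B" "(fst a, gt \<sigma> a) \<notin> D'" by blast
        have P: "fst a \<in> set Sch" using PB a by blast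
        have "(St (fst a), gt \<sigma> a) \<in> M" using bB a by blast
        then have "(Fa (fst a), gt \<sigma> a) \<in> M" using can P a by blast
        then show ?thesis using a by blast
      next
        assume "\<exists>a\<in>set H. (fst a, gt \<sigma> a) \<in> D'"
        then obtain a where a: "a \<in> set H" "(fst a, gt \<sigma> a) \<in> D'" by blast
        obtain j where j: "j < length H" "a = H ! j" using in_set_nth_ex[OF a(1)] by blast
        have P: "fst a \<in> set Sch" using PH a by blast
        show ?thesis
        proof (cases "j \<in> set J")
          case True
          then have "(Fa (fst a), gt \<sigma> a) \<in> M" using bJ j by blast
          then show ?thesis using can P a by blast
        next
          case False
          then have "(Ext (fst a), gt \<sigma> a) \<notin> M" using bK j by blast
          then have "(fst a, gt \<sigma> a) \<notin> D0" using ext P by blast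
          then have "(Tr (fst a), gt \<sigma> a) \<in> M" using can P a by blast
          then show ?thesis using a by blast
        qed
      qed
    qed
  qed
  have RMM: "reduct_model cs bi (repair_prog Sch ar ics) M M"
    unfolding reduct_repair[OF cs] using icM schM by blast
  have nomin: "\<not> (\<exists>N. N \<subset> M \<and> (\<forall>x\<in>M. fst x \<notin> repair_preds Sch \<longrightarrow> x \<in> N) \<and>
        reduct_model cs bi (repair_prog Sch ar ics) M N)"
  proof
    assume "\<exists>N. N \<subset> M \<and> (\<forall>x\<in>M. fst x \<notin> repair_preds Sch \<longrightarrow> x \<in> N) \<and>
        reduct_model cs bi (repair_prog Sch ar ics) M N"
    then obtain N where NM: "N \<subset> M" and ag: "\<forall>x\<in>M. fst x \<notin> repair_preds Sch \<longrightarrow> x \<in> N"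
      and rN: "reduct_model cs bi (repair_prog Sch ar ics) M N" by blast
    have icN: "\<forall>ic\<in>set ics. ic_ok cs bi ic M N" and schN: "\<forall>P\<in>set Sch. sch_ok cs ar P M N"
      using rN unfolding reduct_repair[OF cs] by blast+
    have ExtN: "(Ext P,t)\<in>N \<longleftrightarrow> (Ext P,t)\<in>M" for P t using ag NM by auto
    have TrN: "(P,t)\<in>D' \<and> (P,t)\<notin>D0" if "P\<in>set Sch" "(Tr P,t)\<in>N" for P t
      using that NM can by blast
    have FaN: "(P,t)\<in>D0 \<and> (P,t)\<notin>D'" if "P\<in>set Sch" "(Fa P,t)\<in>N" for P t
      using that NM can by blast
    define D'' where "D'' = {(P,t). P\<in>set Sch \<and> ((P,t)\<in>D0 \<or> (Tr P,t)\<in>N) \<and> (Fa P,t)\<notin>N}"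
    have StN: "(St P,t)\<in>N" if "P\<in>set Sch" "(P,t)\<in>D0 \<or> (Tr P,t)\<in>N" for P t
    proof (cases "(P,t)\<in>D0")
      case True
      then have "(Ext P,t)\<in>N" "length t = ar P" "set t \<subseteq> set cs" using ext ExtN D0wf that by auto
      then show ?thesis using schN that unfolding sch_ok_def by blast
    next
      case False
      then have "(Tr P,t)\<in>N" using that by blast
      moreover have "length t = ar P" "set t \<subseteq> set cs" using TrN[OF that(1) \<open>(Tr P,t)\<in>N\<close>] D'wf by auto
      ultimately show ?thesis using schN that unfolding sch_ok_def by blast
    qed
    have inst2: "instance_over Sch ar cs D''"
      unfolding instance_over_def D''_def using D0wf D'wf TrN by fast
    have sat2: "satisfies_ics cs bi ics D''"
      unfolding satisfies_ics_def
    proof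
      fix ic assume ic: "ic \<in> set ics"
      obtain B H ph where icd: "ic = IC B H ph" by (cases ic)
      have wf: "wf_ic Sch ar cs (IC B H ph)" using icwf ic icd by blast
      have okN: "ic_ok cs bi (IC B H ph) M N" using icN ic icd by blast
      show "ic_sat cs bi D'' ic" unfolding icd ic_sat_gt
      proof (intro allI impI)
        fix \<sigma> assume \<sigma>: "range \<sigma> \<subseteq> set cs" and bB: "\<forall>a\<in>set B. (fst a, gt \<sigma> a) \<in> D''"
        show "(\<exists>a\<in>set H. (fst a, gt \<sigma> a) \<in> D'') \<or> (\<exists>(pl,b,ts)\<in>set ph. bi b (map (tev id \<sigma>) ts) = pl)"
        proof (rule ccontr)
          assume nh: "\<not> ?thesis"
          define J where "J = filter (\<lambda>j. (fst (H!j), gt \<sigma> (H!j)) \<in> D0) [0..<length H]"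
          have J: "J \<in> set (subseqs [0..<length H])" unfolding J_def by (rule filter_subseqs)
          have PB: "fst a \<in> set Sch" if "a \<in> set B" for a using gt_props[OF wf _ \<sigma>] that by blast
          have PH: "fst a \<in> set Sch" if "a \<in> set H" for a using gt_props[OF wf _ \<sigma>] that by blast
          have b1: "\<forall>a\<in>set B. (St (fst a), gt \<sigma> a)\<in>N"
          proof
            fix a assume a: "a \<in> set B"
            then have "(fst a, gt \<sigma> a) \<in> D''" using bB by blast
            then show "(St (fst a), gt \<sigma> a)\<in>N" using StN PB[OF a] unfolding D''_def by blast
          qed
          have b2: "\<forall>j\<in>set J. (Fa (fst (H ! j)), gt \<sigma> (H ! j)) \<in> N"
          proof
            fix j assume "j \<in> set J"
            then have j: "j < length H" "(fst (H!j), gt \<sigma> (H!j)) \<in> D0" unfolding J_def by auto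
            have P: "fst (H!j) \<in> set Sch" using PH j(1) by simp
            have "(fst (H!j), gt \<sigma> (H!j)) \<notin> D''" using nh j(1) by (meson nth_mem)
            then show "(Fa (fst (H ! j)), gt \<sigma> (H ! j)) \<in> N" using j P unfolding D''_def by blast
          qed
          have b3: "\<forall>k<length H. k \<notin> set J \<longrightarrow> (Ext (fst (H ! k)), gt \<sigma> (H ! k)) \<notin> M"
            using ext PH unfolding J_def by auto
          have b4: "\<not> (\<exists>(pl, b, ts)\<in>set ph. bi b (map (tev id \<sigma>) ts) = pl)" using nh by blast
          have "(\<exists>a\<in>set B. (Fa (fst a), gt \<sigma> a)\<in>N) \<or> (\<exists>a\<in>set H. (Tr (fst a), gt \<sigma> a)\<in>N)"
            using okN J \<sigma> b1 b2 b3 b4 unfolding ic_ok.simps by blast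
          then show False
          proof
            assume "\<exists>a\<in>set B. (Fa (fst a), gt \<sigma> a)\<in>N"
            then obtain a where a: "a\<in>set B" "(Fa (fst a), gt \<sigma> a)\<in>N" by blast
            then show False using bB unfolding D''_def by blast
          next
            assume "\<exists>a\<in>set H. (Tr (fst a), gt \<sigma> a)\<in>N"
            then obtain a where a: "a\<in>set H" "(Tr (fst a), gt \<sigma> a)\<in>N" by blast
            have P: "fst a \<in> set Sch" using PH a by blast
            have "(Fa (fst a), gt \<sigma> a) \<notin> N" using TrN[OF P a(2)] FaN[OF P] by blast
            then have "(fst a, gt \<sigma> a) \<in> D''" using a P unfolding D''_def by blast
            then show False using nh a by blast
          qed
        qed
      qed
    qed
    have sub: "symdiff D0 D'' \<subseteq> symdiff D0 D'"
    proof
      fix x assume x: "x \<in> symdiff D0 D''"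
      obtain P t where xpt: "x = (P,t)" by (cases x)
      show "x \<in> symdiff D0 D'"
      proof (cases "x \<in> D0")
        case True
        then have P: "P \<in> set Sch" using D0wf xpt by blast
        have "x \<notin> D''" using x True by (auto simp: symdiff_def)
        then have "(Fa P,t) \<in> N" using True P xpt unfolding D''_def by blast
        then show ?thesis using FaN[OF P] xpt by (auto simp: symdiff_def)
      next
        case False
        then have "x \<in> D''" using x by (auto simp: symdiff_def)
        then have P: "P \<in> set Sch" "(Tr P,t)\<in>N" using False xpt unfolding D''_def by auto
        then show ?thesis using TrN xpt by (auto simp: symdiff_def)
      qed
    qed
    have "symdiff D0 D'' \<noteq> symdiff D0 D'"
    proof
      assume eq: "symdiff D0 D'' = symdiff D0 D'"
      have inD'': "(P,t) \<in> D''" if "(P,t)\<in>D'" "(P,t)\<notin>D0" for P t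
        using eq that by (auto simp: symdiff_def)
      have notD'': "(P,t) \<notin> D''" if "(P,t)\<in>D0" "(P,t)\<notin>D'" for P t
      proof
        assume "(P,t) \<in> D''"
        then have "(P,t) \<notin> symdiff D0 D''" using that by (auto simp: symdiff_def)
        then show False using eq that by (auto simp: symdiff_def)
      qed
      have TrN': "(Tr P,t)\<in>N" if "P\<in>set Sch" "(P,t)\<in>D'" "(P,t)\<notin>D0" for P t
        using inD''[OF that(2,3)] that unfolding D''_def by blast
      have "M \<subseteq> N"
      proof
        fix x assume x: "x \<in> M"
        obtain p t where xpt: "x = (p,t)" by (cases x)
        show "x \<in> N"
        proof (cases "fst x \<in> repair_preds Sch")
          case False then show ?thesis using ag x by blast
        next
          case True
          then obtain P where P: "P \<in> set Sch" "p = Tr P \<or> p = Fa P \<or> p = St P \<or> p = SS P"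
            using xpt unfolding repair_preds_def by auto
          have StN': "(St P,t)\<in>N" if "(P,t)\<in>D0 \<or> (P,t)\<in>D'"
          proof (cases "(P,t)\<in>D0")
            case True then show ?thesis using StN P by blast
          next
            case False then show ?thesis using StN[OF P(1)] TrN'[OF P(1)] that by blast
          qed
          from P(2) show ?thesis
          proof (elim disjE)
            assume "p = Tr P" then show ?thesis using x xpt can P TrN' by auto
          next
            assume p: "p = Fa P"
            then have "(P,t)\<in>D0" "(P,t)\<notin>D'" using x xpt can P by auto
            then have "(P,t)\<notin>D''" using notD'' by blast
            then show ?thesis using p xpt P \<open>(P,t)\<in>D0\<close> unfolding D''_def by blast
          next
            assume p: "p = St P"
            then show ?thesis using x xpt can P StN' by auto
          next
            assume p: "p = SS P"
            then have d: "(P,t)\<in>D'" using x xpt can P by auto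
            then have "(St P,t)\<in>N" "(Fa P,t)\<notin>M" using StN' can P by auto
            moreover have "length t = ar P" "set t \<subseteq> set cs" using D'wf d by auto
            ultimately show ?thesis using schN P p xpt unfolding sch_ok_def by blast
          qed
        qed
      qed
      then show False using NM by blast
    qed
    then have "symdiff D0 D'' \<subset> symdiff D0 D'" using sub by blast
    then show False using minD' inst2 sat2 by blast
  qed
  show ?thesis unfolding so_min_def using RMM nomin by blast
qed



definition heads :: "'c list \<Rightarrow> ('p,'c,'b) rule list \<Rightarrow> ('p \<times> 'c list) set" where
  "heads cs Pr = {gatom \<sigma> a | \<sigma> a r. r \<in> set Pr \<and> a \<in> set (rhead r) \<and> range \<sigma> \<subseteq> set cs}"

lemma fst_gatom[simp]: "fst (gatom \<sigma> a) = fst a" by (simp add: gatom_def)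

lemma heads_defined: "x \<in> heads cs Pr \<Longrightarrow> fst x \<in> defined_preds Pr"
  unfolding heads_def defined_preds_def by force

lemma stable_sub_heads:
  assumes "stable_model cs bi Pr E MQ"
  shows "MQ \<subseteq> E \<union> heads cs Pr"
proof -
  have EM: "E \<subseteq> MQ" and r: "reduct_model cs bi Pr MQ MQ"
    and mn: "\<not> (\<exists>N. N \<subset> MQ \<and> E \<subseteq> N \<and> reduct_model cs bi Pr MQ N)"
    using assms unfolding stable_model_def by blast+
  define N where "N = MQ \<inter> (E \<union> heads cs Pr)"
  have rN: "reduct_model cs bi Pr MQ N"
    unfolding reduct_model_def
  proof (intro ballI allI impI)
    fix rr \<sigma> assume rr: "rr \<in> set Pr" and \<sigma>: "range \<sigma> \<subseteq> set cs"
      and p: "\<forall>a\<in>set (rpos rr). gatom \<sigma> a \<in> N" and n: "\<forall>a\<in>set (rneg rr). gatom \<sigma> a \<notin> MQ"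
      and b: "bis_true bi \<sigma> (rbis rr)"
    have "\<exists>a\<in>set (rhead rr). gatom \<sigma> a \<in> MQ"
      using r rr \<sigma> p n b unfolding reduct_model_def N_def by blast
    then obtain a where a: "a \<in> set (rhead rr)" "gatom \<sigma> a \<in> MQ" by blast
    have "gatom \<sigma> a \<in> heads cs Pr" unfolding heads_def using rr a \<sigma> by blast
    then show "\<exists>a\<in>set (rhead rr). gatom \<sigma> a \<in> N" using a unfolding N_def by blast
  qed
  have NMQ: "N \<subseteq> MQ" by (simp add: N_def)
  have EN: "E \<subseteq> N" using EM unfolding N_def by blast
  have "\<not> N \<subset> MQ" using mn rN EN by blast
  then have "N = MQ" using NMQ by blast
  then show ?thesis unfolding N_def by blast
qed

lemma qp_facts:
  assumes "query_program Sch ar arq cs ans PQ"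
  shows "\<forall>r\<in>set PQ. \<forall>a\<in>set (rpos r) \<union> set (rneg r). (\<exists>P\<in>set Sch. fst a = SS P) \<or> fst a \<in> defined_preds PQ"
    and "\<forall>p\<in>defined_preds PQ. \<exists>q. p = Qp q"
proof -
  have h: "\<forall>r\<in>set PQ. \<forall>a\<in>set (rhead r). \<exists>q. fst a = Qp q"
    and b: "\<forall>r\<in>set PQ. \<forall>a\<in>set (rpos r) \<union> set (rneg r).
        (\<exists>P\<in>set Sch. fst a = SS P) \<or> fst a \<in> defined_preds PQ"
    using assms unfolding query_program_def by blast+
  show "\<forall>r\<in>set PQ. \<forall>a\<in>set (rpos r) \<union> set (rneg r). (\<exists>P\<in>set Sch. fst a = SS P) \<or> fst a \<in> defined_preds PQ"
    using b .
  show "\<forall>p\<in>defined_preds PQ. \<exists>q. p = Qp q"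
  proof
    fix p assume "p \<in> defined_preds PQ"
    then obtain r a where "r \<in> set PQ" "a \<in> set (rhead r)" "p = fst a"
      unfolding defined_preds_def by blast
    then show "\<exists>q. p = Qp q" using h by blast
  qed
qed

lemma q1:
  fixes M :: "(('r,'q) pn \<times> 'c list) set" and PQ :: "(('r,'q) pn,'c,'b) rule list"
  assumes qp: "query_program Sch ar arq cs ans PQ"
    and smin: "so_min cs bi PQ (defined_preds PQ) M"
  shows "stable_model cs bi PQ {(SS P, t) | P t. (P, t) \<in> {(P,t). P\<in>set Sch \<and> (SS P,t)\<in>M}}
           ({(SS P, t) | P t. (P, t) \<in> {(P,t). P\<in>set Sch \<and> (SS P,t)\<in>M}} \<union> {x\<in>M. fst x \<in> defined_preds PQ})"
proof -
  define E :: "(('r,'q) pn \<times> 'c list) set"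
    where "E = {(SS P, t) | P t. (P, t) \<in> {(P,t). P\<in>set Sch \<and> (SS P,t)\<in>M}}"
  define MQ where "MQ = E \<union> {x\<in>M. fst x \<in> defined_preds PQ}"
  note qf = qp_facts[OF qp]
  have SSnd: "SS P \<notin> defined_preds PQ" for P using qf(2) by blast
  have Efst: "x \<in> E \<Longrightarrow> \<exists>P\<in>set Sch. fst x = SS P" for x unfolding E_def by auto
  have bodyeq: "x \<in> MQ \<longleftrightarrow> x \<in> M" if hx: "(\<exists>P\<in>set Sch. fst x = SS P) \<or> fst x \<in> defined_preds PQ" for x
  proof (cases "fst x \<in> defined_preds PQ")
    case True
    then have "x \<notin> E" using Efst SSnd by metis
    then show ?thesis using True unfolding MQ_def by blast
  next
    case False
    then obtain P where P: "P \<in> set Sch" "fst x = SS P" using hx by blast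
    obtain p t where xpt: "x = (p,t)" by (cases x)
    have "x \<in> MQ \<longleftrightarrow> x \<in> E" using False unfolding MQ_def by blast
    also have "\<dots> \<longleftrightarrow> x \<in> M" using P xpt unfolding E_def by auto
    finally show ?thesis .
  qed
  have bt: "(\<exists>P\<in>set Sch. fst (gatom \<sigma> a) = SS P) \<or> fst (gatom \<sigma> a) \<in> defined_preds PQ"
    if "r \<in> set PQ" "a \<in> set (rpos r) \<union> set (rneg r)" for r a \<sigma>
    using qf(1) that by simp
  have RMM: "reduct_model cs bi PQ M M"
    and nomin: "\<not> (\<exists>N. N \<subset> M \<and> (\<forall>x\<in>M. fst x \<notin> defined_preds PQ \<longrightarrow> x \<in> N) \<and> reduct_model cs bi PQ M N)"
    using smin unfolding so_min_def by blast+
  have hd: "fst a \<in> defined_preds PQ" if "r \<in> set PQ" "a \<in> set (rhead r)" for r a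
    using that unfolding defined_preds_def by blast
  have r1: "reduct_model cs bi PQ MQ MQ"
    unfolding reduct_model_def
  proof (intro ballI allI impI)
    fix r \<sigma> assume r: "r \<in> set PQ" and \<sigma>: "range \<sigma> \<subseteq> set cs"
      and p: "\<forall>a\<in>set (rpos r). gatom \<sigma> a \<in> MQ" and n: "\<forall>a\<in>set (rneg r). gatom \<sigma> a \<notin> MQ"
      and b: "bis_true bi \<sigma> (rbis r)"
    have p': "\<forall>a\<in>set (rpos r). gatom \<sigma> a \<in> M" using p bodyeq[OF bt[OF r]] by blast
    have n': "\<forall>a\<in>set (rneg r). gatom \<sigma> a \<notin> M" using n bodyeq[OF bt[OF r]] by blast
    obtain a where a: "a \<in> set (rhead r)" "gatom \<sigma> a \<in> M"
      using RMM r \<sigma> p' n' b unfolding reduct_model_def by blast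
    then show "\<exists>a\<in>set (rhead r). gatom \<sigma> a \<in> MQ" using hd[OF r a(1)] unfolding MQ_def by auto
  qed
  have mn: "\<not> (\<exists>N. N \<subset> MQ \<and> E \<subseteq> N \<and> reduct_model cs bi PQ MQ N)"
  proof
    assume "\<exists>N. N \<subset> MQ \<and> E \<subseteq> N \<and> reduct_model cs bi PQ MQ N"
    then obtain N where NM: "N \<subset> MQ" and EN: "E \<subseteq> N" and rN: "reduct_model cs bi PQ MQ N" by blast
    define N' where "N' = {x\<in>M. fst x \<notin> defined_preds PQ} \<union> {x\<in>N. fst x \<in> defined_preds PQ}"
    have N'M: "N' \<subseteq> M" using NM unfolding N'_def MQ_def E_def by auto
    have ag: "\<forall>x\<in>M. fst x \<notin> defined_preds PQ \<longrightarrow> x \<in> N'" unfolding N'_def by blast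
    obtain x where x: "x \<in> MQ" "x \<notin> N" using NM by blast
    have "x \<notin> E" using x EN by blast
    then have xM: "x \<in> M" and xd: "fst x \<in> defined_preds PQ" using x unfolding MQ_def by auto
    moreover have "x \<notin> N'" using x xd unfolding N'_def by blast
    ultimately have st: "N' \<subset> M" using N'M by blast
    have "reduct_model cs bi PQ M N'"
      unfolding reduct_model_def
    proof (intro ballI allI impI)
      fix r \<sigma> assume r: "r \<in> set PQ" and \<sigma>: "range \<sigma> \<subseteq> set cs"
        and p: "\<forall>a\<in>set (rpos r). gatom \<sigma> a \<in> N'" and n: "\<forall>a\<in>set (rneg r). gatom \<sigma> a \<notin> M"
        and b: "bis_true bi \<sigma> (rbis r)"
      have p': "\<forall>a\<in>set (rpos r). gatom \<sigma> a \<in> N"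
      proof
        fix a assume a: "a \<in> set (rpos r)"
        show "gatom \<sigma> a \<in> N"
        proof (cases "fst a \<in> defined_preds PQ")
          case True then show ?thesis using p a unfolding N'_def by auto
        next
          case False
          then obtain P where P: "P \<in> set Sch" "fst a = SS P" using qf(1) r a by blast
          have "gatom \<sigma> a \<in> M" using p a N'M by blast
          moreover have "gatom \<sigma> a = (SS P, snd (gatom \<sigma> a))" using P(2)
            by (metis fst_gatom prod.collapse)
          ultimately have "gatom \<sigma> a \<in> E" unfolding E_def using P(1) by force
          then show ?thesis using EN by blast
        qed
      qed
      have n': "\<forall>a\<in>set (rneg r). gatom \<sigma> a \<notin> MQ" using n bodyeq[OF bt[OF r]] by blast
      obtain a where a: "a \<in> set (rhead r)" "gatom \<sigma> a \<in> N"
        using rN r \<sigma> p' n' b unfolding reduct_model_def by blast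
      then show "\<exists>a\<in>set (rhead r). gatom \<sigma> a \<in> N'" using hd[OF r a(1)] unfolding N'_def by auto
    qed
    then show False using nomin st ag by blast
  qed
  show ?thesis unfolding stable_model_def E_def[symmetric] MQ_def[symmetric]
    using r1 mn by (auto simp: MQ_def)
qed


lemma q2:
  fixes M MQ :: "(('r,'q) pn \<times> 'c list) set" and PQ :: "(('r,'q) pn,'c,'b) rule list"
    and D' :: "('r \<times> 'c list) set"
  assumes qp: "query_program Sch ar arq cs ans PQ"
    and D'S: "\<forall>(P,t)\<in>D'. P \<in> set Sch"
    and stab: "stable_model cs bi PQ {(SS P, t) | P t. (P, t) \<in> D'} MQ"
    and MSS: "\<forall>P\<in>set Sch. \<forall>t. (SS P,t)\<in>M \<longleftrightarrow> (P,t)\<in>D'"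
    and Mdef: "\<forall>x. fst x \<in> defined_preds PQ \<longrightarrow> (x \<in> M \<longleftrightarrow> x \<in> MQ)"
  shows "so_min cs bi PQ (defined_preds PQ) M"
proof -
  define E :: "(('r,'q) pn \<times> 'c list) set" where "E = {(SS P, t) | P t. (P, t) \<in> D'}"
  note qf = qp_facts[OF qp]
  have SSnd: "SS P \<notin> defined_preds PQ" for P using qf(2) by blast
  have EM: "E \<subseteq> MQ" and r: "reduct_model cs bi PQ MQ MQ"
    and mn: "\<not> (\<exists>N. N \<subset> MQ \<and> E \<subseteq> N \<and> reduct_model cs bi PQ MQ N)"
    using stab unfolding stable_model_def E_def by blast+
  have MQsub: "MQ \<subseteq> E \<union> heads cs PQ" using stable_sub_heads[OF stab] unfolding E_def .
  have bodyeq: "x \<in> MQ \<longleftrightarrow> x \<in> M" if hx: "(\<exists>P\<in>set Sch. fst x = SS P) \<or> fst x \<in> defined_preds PQ" for x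
  proof (cases "fst x \<in> defined_preds PQ")
    case True then show ?thesis using Mdef by blast
  next
    case False
    then obtain P where P: "P \<in> set Sch" "fst x = SS P" using hx by blast
    have "x \<notin> heads cs PQ" using heads_defined False by blast
    then have "x \<in> MQ \<longleftrightarrow> x \<in> E" using MQsub EM by blast
    also have "\<dots> \<longleftrightarrow> x \<in> M"
    proof -
      obtain p t where xpt: "x = (p,t)" by (cases x)
      then show ?thesis using MSS P unfolding E_def by auto
    qed
    finally show ?thesis .
  qed
  have bt: "(\<exists>P\<in>set Sch. fst (gatom \<sigma> a) = SS P) \<or> fst (gatom \<sigma> a) \<in> defined_preds PQ"
    if "r \<in> set PQ" "a \<in> set (rpos r) \<union> set (rneg r)" for r a \<sigma>
    using qf(1) that by simp
  have hd: "fst a \<in> defined_preds PQ" if "r \<in> set PQ" "a \<in> set (rhead r)" for r a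
    using that unfolding defined_preds_def by blast
  have RMM: "reduct_model cs bi PQ M M"
    unfolding reduct_model_def
  proof (intro ballI allI impI)
    fix rr \<sigma> assume rr: "rr \<in> set PQ" and \<sigma>: "range \<sigma> \<subseteq> set cs"
      and p: "\<forall>a\<in>set (rpos rr). gatom \<sigma> a \<in> M" and n: "\<forall>a\<in>set (rneg rr). gatom \<sigma> a \<notin> M"
      and b: "bis_true bi \<sigma> (rbis rr)"
    have p': "\<forall>a\<in>set (rpos rr). gatom \<sigma> a \<in> MQ" using p bodyeq[OF bt[OF rr]] by blast
    have n': "\<forall>a\<in>set (rneg rr). gatom \<sigma> a \<notin> MQ" using n bodyeq[OF bt[OF rr]] by blast
    obtain a where a: "a \<in> set (rhead rr)" "gatom \<sigma> a \<in> MQ"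
      using r rr \<sigma> p' n' b unfolding reduct_model_def by blast
    moreover have "fst (gatom \<sigma> a) \<in> defined_preds PQ" using hd[OF rr a(1)] by simp
    ultimately show "\<exists>a\<in>set (rhead rr). gatom \<sigma> a \<in> M" using Mdef by blast
  qed
  have nomin: "\<not> (\<exists>N. N \<subset> M \<and> (\<forall>x\<in>M. fst x \<notin> defined_preds PQ \<longrightarrow> x \<in> N) \<and> reduct_model cs bi PQ M N)"
  proof
    assume "\<exists>N. N \<subset> M \<and> (\<forall>x\<in>M. fst x \<notin> defined_preds PQ \<longrightarrow> x \<in> N) \<and> reduct_model cs bi PQ M N"
    then obtain N where NM: "N \<subset> M" and ag: "\<forall>x\<in>M. fst x \<notin> defined_preds PQ \<longrightarrow> x \<in> N"
      and rN: "reduct_model cs bi PQ M N" by blast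
    define NQ where "NQ = E \<union> {x\<in>N. fst x \<in> defined_preds PQ}"
    have NQM: "NQ \<subseteq> MQ" using EM NM Mdef unfolding NQ_def by blast
    obtain x where x: "x \<in> M" "x \<notin> N" using NM by blast
    have xd: "fst x \<in> defined_preds PQ" using ag x by blast
    then have "x \<in> MQ" using Mdef x by blast
    moreover have "x \<notin> NQ" using x xd SSnd unfolding NQ_def E_def by auto
    ultimately have st: "NQ \<subset> MQ" using NQM by blast
    have EN: "E \<subseteq> NQ" unfolding NQ_def by blast
    have "reduct_model cs bi PQ MQ NQ"
      unfolding reduct_model_def
    proof (intro ballI allI impI)
      fix rr \<sigma> assume rr: "rr \<in> set PQ" and \<sigma>: "range \<sigma> \<subseteq> set cs"
        and p: "\<forall>a\<in>set (rpos rr). gatom \<sigma> a \<in> NQ" and n: "\<forall>a\<in>set (rneg rr). gatom \<sigma> a \<notin> MQ"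
        and b: "bis_true bi \<sigma> (rbis rr)"
      have p': "\<forall>a\<in>set (rpos rr). gatom \<sigma> a \<in> N"
      proof
        fix a assume a: "a \<in> set (rpos rr)"
        show "gatom \<sigma> a \<in> N"
        proof (cases "fst a \<in> defined_preds PQ")
          case True
          have g: "gatom \<sigma> a \<in> NQ" using p a by blast
          have "gatom \<sigma> a \<notin> E"
          proof
            assume "gatom \<sigma> a \<in> E"
            then obtain P t where "gatom \<sigma> a = (SS P,t)" unfolding E_def by blast
            then have "fst a = SS P" by (metis fst_conv fst_gatom)
            then show False using True SSnd by simp
          qed
          then show ?thesis using g unfolding NQ_def by blast
        next
          case False
          then obtain P where P: "P \<in> set Sch" "fst a = SS P" using qf(1) rr a by blast
          have "gatom \<sigma> a \<in> MQ" using p a NQM by blast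
          then have "gatom \<sigma> a \<in> M" using bodyeq[OF bt[OF rr]] a by blast
          then show ?thesis using ag False by simp
        qed
      qed
      have n': "\<forall>a\<in>set (rneg rr). gatom \<sigma> a \<notin> M" using n bodyeq[OF bt[OF rr]] by blast
      obtain a where a: "a \<in> set (rhead rr)" "gatom \<sigma> a \<in> N"
        using rN rr \<sigma> p' n' b unfolding reduct_model_def by blast
      then show "\<exists>a\<in>set (rhead rr). gatom \<sigma> a \<in> NQ" using hd[OF rr a(1)] unfolding NQ_def by auto
    qed
    then show False using mn st EN by blast
  qed
  show ?thesis unfolding so_min_def using RMM nomin by blast
qed



lemma atom_consts_mapp[simp]: "atom_consts (mapp g a) = atom_consts a"
  by (simp add: atom_consts_def mapp_def)

lemma rp_consts:
  assumes icwf: "\<forall>ic\<in>set ics. wf_ic Sch ar cs ic"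
  shows "\<forall>r\<in>set (repair_prog Sch ar ics). rule_consts r \<subseteq> set cs"
proof
  fix r assume r: "r \<in> set (repair_prog Sch ar ics)"
  then consider (ic) ic where "ic \<in> set ics" "r \<in> set (ic_rules ic)"
    | (sch) P where "r \<in> set (schema_rules ar P)"
    unfolding repair_prog_def by auto
  then show "rule_consts r \<subseteq> set cs"
  proof cases
    case ic
    obtain B H ph where icd: "ic = IC B H ph" by (cases ic)
    have wf: "\<forall>a\<in>set B \<union> set H. atom_consts a \<subseteq> set cs" "\<forall>l\<in>set ph. blit_consts l \<subseteq> set cs"
    proof -
      have "wf_ic Sch ar cs (IC B H ph)" using icwf ic icd by blast
      then show "\<forall>a\<in>set B \<union> set H. atom_consts a \<subseteq> set cs" "\<forall>l\<in>set ph. blit_consts l \<subseteq> set cs"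
        by auto
    qed
    obtain J where J: "J \<in> set (subseqs [0..<length H])" and rd:
      "r = Rule (map (mapp Fa) B @ map (mapp Tr) H)
                   (map (mapp St) B @ map (\<lambda>j. mapp Fa (H ! j)) J)
                   (map (\<lambda>k. mapp Ext (H ! k)) (filter (\<lambda>k. k \<notin> set J) [0..<length H]))
                   (map (\<lambda>(pl,b,ts). (\<not> pl, b, ts)) ph)"
      using ic(2) icd by auto
    have Jl: "\<forall>j\<in>set J. j < length H" using subseqs_set[OF J] by auto
    have bl: "blit_consts ((\<lambda>(pl,b,ts). (\<not> pl, b, ts)) l) = blit_consts l" for l
      by (cases l) (auto simp: blit_consts_def)
    show ?thesis unfolding rd rule_consts_def rule_atoms_def using wf Jl
      by (force simp: blit_consts_def)
  next
    case sch
    have ac: "atom_consts (p, map V xs) = {}" for p :: "('r,'q) pn" and xs :: "nat list"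
      by (auto simp: atom_consts_def)
    show ?thesis using sch by (auto simp: ac schema_rules_def Let_def rule_consts_def rule_atoms_def)
  qed
qed



lemma pq_consts: "query_program Sch ar arq cs ans PQ \<Longrightarrow> \<forall>r\<in>set PQ. rule_consts r \<subseteq> set cs"
  unfolding query_program_def by blast

lemma dir1:
  fixes Sch :: "'r list" and ar :: "'r \<Rightarrow> nat" and arq :: "'q \<Rightarrow> nat"
    and cs :: "'c list" and bi :: "'b \<Rightarrow> 'c list \<Rightarrow> bool"
    and ics :: "('r,'c,'b) ic list" and D :: "('r \<times> 'c list) list"
    and PQ :: "(('r,'q) pn,'c,'b) rule list" and ans :: 'q and a :: "'c list"
  assumes cs: "cs \<noteq> []"
    and wfdb: "wf_db Sch ar cs D"
    and icwf: "\<forall>ic\<in>set ics. wf_ic Sch ar cs ic"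
    and qp: "query_program Sch ar arq cs ans PQ"
    and aa: "set a \<subseteq> set cs"
    and ca: "cons_answer Sch ar cs bi ics D PQ ans a"
  shows "so_entails (pn_arity ar arq) cs bi
           {FO (RD Sch ar cs D),
            SOMin (repair_preds Sch) (psi (repair_prog Sch ar ics)),
            SOMin (defined_preds PQ) (psi PQ)}
           (FAtom (Qp ans) (map Cn a))"
  unfolding so_entails_def
proof (intro allI impI)
  fix S :: "('c,'c,('r,'q) pn,'b) struct"
  assume wf: "wf_struct (pn_arity ar arq) cs bi S"
    and hs: "\<forall>g\<in>{FO (RD Sch ar cs D), SOMin (repair_preds Sch) (psi (repair_prog Sch ar ics)),
            SOMin (defined_preds PQ) (psi PQ)}. so_holds S g"
  define f where "f = cint S"
  define M where "M = gr cs f (pint S)"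
  have ne: "sdom S \<noteq> {}" and cin: "\<forall>c\<in>set cs. f c \<in> sdom S"
    and ar: "\<forall>p. \<forall>t\<in>pint S p. length t = pn_arity ar arq p \<and> set t \<subseteq> sdom S"
    and bi: "\<forall>b as. set as \<subseteq> set cs \<longrightarrow> bint S b (map (cint S) as) = bi b as"
    using wf unfolding wf_struct_def f_def by blast+
  have hRD: "holds_with S (\<lambda>_. {}) (RD Sch ar cs D)" using hs by simp
  have dsub: "sdom S \<subseteq> f ` set cs" and inj: "inj_on f (set cs)"
    and comp: "\<forall>P\<in>set Sch. \<forall>u. length u = ar P \<longrightarrow> set u \<subseteq> sdom S \<longrightarrow>
        (u \<in> pint S (Ext P) \<longleftrightarrow> (\<exists>t. (P,t) \<in> set D \<and> u = map f t))"
    using holds_RD[OF ne wfdb] hRD unfolding f_def by blast+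
  have dom: "sdom S = cint S ` set cs" using dsub cin unfolding f_def by blast
  have tup: "\<forall>p. \<forall>u\<in>pint S p. set u \<subseteq> sdom S" using ar by blast
  have inj': "inj_on (cint S) (set cs)" using inj unfolding f_def .
  have smR: "so_min cs bi (repair_prog Sch ar ics) (repair_preds Sch) M"
    using so_holds_SOMin[OF dom bi rp_consts[OF icwf] inj' tup] hs unfolding M_def f_def by simp
  have smQ: "so_min cs bi PQ (defined_preds PQ) M"
    using so_holds_SOMin[OF dom bi pq_consts[OF qp] inj' tup] hs unfolding M_def f_def by simp
  have D0wf: "\<forall>(P,t)\<in>set D. P\<in>set Sch \<and> length t = ar P \<and> set t \<subseteq> set cs"
    using wfdb unfolding wf_db_def .
  have injm: "map f t = map f t' \<longleftrightarrow> t = t'" if "set t \<subseteq> set cs" "set t' \<subseteq> set cs" for t t'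
    using inj that by (intro inj_on_map_eq_map) (auto intro: inj_on_subset)
  have ext: "\<forall>P\<in>set Sch. \<forall>t. (Ext P,t)\<in>M \<longleftrightarrow> (P,t)\<in>set D"
  proof (intro ballI allI)
    fix P t assume P: "P \<in> set Sch"
    show "(Ext P,t)\<in>M \<longleftrightarrow> (P,t)\<in>set D"
    proof
      assume "(Ext P,t)\<in>M"
      then have t: "set t \<subseteq> set cs" "map f t \<in> pint S (Ext P)" unfolding M_def gr_def by auto
      then have "length (map f t) = ar P" "set (map f t) \<subseteq> sdom S" using ar by fastforce+
      then obtain t' where "(P,t') \<in> set D" "map f t = map f t'" using comp P t by blast
      moreover have "set t' \<subseteq> set cs" using D0wf \<open>(P,t') \<in> set D\<close> by blast
      ultimately show "(P,t)\<in>set D" using injm t by metis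
    next
      assume d: "(P,t)\<in>set D"
      then have "length t = ar P" "set t \<subseteq> set cs" using D0wf by blast+
      then have "length (map f t) = ar P" "set (map f t) \<subseteq> sdom S" using dom unfolding f_def by auto
      then have "map f t \<in> pint S (Ext P)" using comp P d by blast
      then show "(Ext P,t)\<in>M" using \<open>set t \<subseteq> set cs\<close> unfolding M_def gr_def by simp
    qed
  qed
  have Mcs: "\<forall>x\<in>M. set (snd x) \<subseteq> set cs" unfolding M_def gr_def by auto
  have Mlen: "\<forall>P t. (Tr P,t)\<in>M \<or> (SS P,t)\<in>M \<longrightarrow> length t = ar P"
  proof (intro allI impI)
    fix P t assume "(Tr P,t)\<in>M \<or> (SS P,t)\<in>M"
    then have "map f t \<in> pint S (Tr P) \<or> map f t \<in> pint S (SS P)" unfolding M_def gr_def by auto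
    then show "length t = ar P" using ar by fastforce
  qed
  define D' where "D' = {(P,t). P\<in>set Sch \<and> (SS P,t)\<in>M}"
  have rep: "is_repair Sch ar cs bi ics (set D) D'"
    unfolding D'_def by (rule rep1[OF cs D0wf icwf ext Mcs Mlen smR])
  have qa: "query_answer cs bi PQ ans D' a" using ca rep unfolding cons_answer_def by blast
  have "stable_model cs bi PQ {(SS P, t) | P t. (P, t) \<in> D'}
          ({(SS P, t) | P t. (P, t) \<in> D'} \<union> {x\<in>M. fst x \<in> defined_preds PQ})"
    unfolding D'_def by (rule q1[OF qp smQ])
  then have "(Qp ans, a) \<in> {(SS P, t) | P t. (P, t) \<in> D'} \<union> {x\<in>M. fst x \<in> defined_preds PQ}"
    using qa unfolding query_answer_def by blast
  then have "(Qp ans, a) \<in> M" by blast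
  then have am: "map f a \<in> pint S (Qp ans)" unfolding M_def gr_def by simp
  show "so_holds S (FO (FAtom (Qp ans) (map Cn a)))"
    using am by (simp add: holds_with_def f_def comp_def)
qed

lemma dir2:
  fixes Sch :: "'r list" and ar :: "'r \<Rightarrow> nat" and arq :: "'q \<Rightarrow> nat"
    and cs :: "'c list" and bi :: "'b \<Rightarrow> 'c list \<Rightarrow> bool"
    and ics :: "('r,'c,'b) ic list" and D :: "('r \<times> 'c list) list"
    and PQ :: "(('r,'q) pn,'c,'b) rule list" and ans :: 'q and a :: "'c list"
  assumes cs: "cs \<noteq> []"
    and wfdb: "wf_db Sch ar cs D"
    and icwf: "\<forall>ic\<in>set ics. wf_ic Sch ar cs ic"
    and qp: "query_program Sch ar arq cs ans PQ"
    and aa: "set a \<subseteq> set cs"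
    and se: "so_entails (pn_arity ar arq) cs bi
           {FO (RD Sch ar cs D),
            SOMin (repair_preds Sch) (psi (repair_prog Sch ar ics)),
            SOMin (defined_preds PQ) (psi PQ)}
           (FAtom (Qp ans) (map Cn a))"
  shows "cons_answer Sch ar cs bi ics D PQ ans a"
  unfolding cons_answer_def query_answer_def
proof (intro allI impI)
  fix D' MQ
  assume rep: "is_repair Sch ar cs bi ics (set D) D'"
    and stab: "stable_model cs bi PQ {(SS P, t) | P t. (P, t) \<in> D'} MQ"
  define D0 where "D0 = set D"
  define E :: "(('r,'q) pn \<times> 'c list) set" where "E = {(SS P, t) | P t. (P, t) \<in> D'}"
  define M :: "(('r,'q) pn \<times> 'c list) set" where "M =
     {(Ext P,t)|P t. (P,t)\<in>D0} \<union> {(Tr P,t)|P t. (P,t)\<in>D' \<and> (P,t)\<notin>D0} \<union>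
     {(Fa P,t)|P t. (P,t)\<in>D0 \<and> (P,t)\<notin>D'} \<union> {(St P,t)|P t. (P,t)\<in>D0 \<or> (P,t)\<in>D'} \<union>
     {(SS P,t)|P t. (P,t)\<in>D'} \<union> {x\<in>MQ. fst x \<in> defined_preds PQ}"
  define S :: "('c,'c,('r,'q) pn,'b) struct" where
    "S = \<lparr>sdom = set cs, cint = id, pint = (\<lambda>p. {t. (p,t)\<in>M}), bint = bi\<rparr>"
  note qf = qp_facts[OF qp]
  have D0wf: "\<forall>(P,t)\<in>D0. P\<in>set Sch \<and> length t = ar P \<and> set t \<subseteq> set cs"
    using wfdb unfolding wf_db_def D0_def .
  have D'wf: "P\<in>set Sch \<and> length t = ar P \<and> set t \<subseteq> set cs" if "(P,t)\<in>D'" for P t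
  proof -
    have "instance_over Sch ar cs D'" using rep unfolding is_repair_def by (elim conjE)
    then show ?thesis using that unfolding instance_over_def by blast
  qed
  have MQsub: "MQ \<subseteq> E \<union> heads cs PQ" using stable_sub_heads[OF stab] unfolding E_def .
  have Qdef: "fst x \<in> defined_preds PQ \<Longrightarrow> \<exists>q. fst x = Qp q" for x using qf(2) by blast
  have Mmem: "(p,t) \<in> M \<longleftrightarrow> (case p of Ext P \<Rightarrow> (P,t)\<in>D0 | Tr P \<Rightarrow> (P,t)\<in>D' \<and> (P,t)\<notin>D0
      | Fa P \<Rightarrow> (P,t)\<in>D0 \<and> (P,t)\<notin>D' | St P \<Rightarrow> (P,t)\<in>D0 \<or> (P,t)\<in>D' | SS P \<Rightarrow> (P,t)\<in>D'
      | Qp q \<Rightarrow> (Qp q,t)\<in>MQ \<and> Qp q \<in> defined_preds PQ)" for p t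
  proof (cases p)
    case (Qp q) then show ?thesis unfolding M_def by auto
  next
    case (Ext P)
    have "Ext P \<notin> defined_preds PQ" using Qdef[of "(Ext P,t)"] by auto
    then show ?thesis using Ext unfolding M_def by auto
  next
    case (Tr P)
    have "Tr P \<notin> defined_preds PQ" using Qdef[of "(Tr P,t)"] by auto
    then show ?thesis using Tr unfolding M_def by auto
  next
    case (Fa P)
    have "Fa P \<notin> defined_preds PQ" using Qdef[of "(Fa P,t)"] by auto
    then show ?thesis using Fa unfolding M_def by auto
  next
    case (St P)
    have "St P \<notin> defined_preds PQ" using Qdef[of "(St P,t)"] by auto
    then show ?thesis using St unfolding M_def by auto
  next
    case (SS P)
    have "SS P \<notin> defined_preds PQ" using Qdef[of "(SS P,t)"] by auto
    then show ?thesis using SS unfolding M_def by auto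
  qed
  have defQ: "x \<in> heads cs PQ \<Longrightarrow> length (snd x) = pn_arity ar arq (fst x) \<and> set (snd x) \<subseteq> set cs" for x
  proof -
    assume "x \<in> heads cs PQ"
    then obtain \<sigma> a r where x: "x = gatom \<sigma> a" and r: "r \<in> set PQ" "a \<in> set (rhead r)"
      and \<sigma>: "range \<sigma> \<subseteq> set cs" unfolding heads_def by blast
    have "\<forall>r\<in>set PQ. \<forall>a\<in>rule_atoms r. length (snd a) = pn_arity ar arq (fst a)"
      using qp unfolding query_program_def by (elim conjE) assumption
    then have "length (snd a) = pn_arity ar arq (fst a)" using r unfolding rule_atoms_def by blast
    moreover have "rule_consts r \<subseteq> set cs" using pq_consts[OF qp] r by blast
    ultimately have "length (snd a) = pn_arity ar arq (fst a)" "rule_consts r \<subseteq> set cs" by blast+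
    moreover have "atom_consts a \<subseteq> set cs" using rule_consts_parts(1)[OF \<open>rule_consts r \<subseteq> set cs\<close>] r by blast
    moreover have "set (map (tev id \<sigma>) (snd a)) \<subseteq> set cs"
      using tev_in[OF \<sigma> atom_consts_sub[OF \<open>atom_consts a \<subseteq> set cs\<close>]] .
    ultimately show ?thesis using x by (simp add: gatom_def)
  qed
  have Mwf: "length (snd x) = pn_arity ar arq (fst x) \<and> set (snd x) \<subseteq> set cs" if "x \<in> M" for x
  proof -
    have *: "x \<in> MQ \<Longrightarrow> fst x \<in> defined_preds PQ \<Longrightarrow> ?thesis"
    proof -
      assume "x \<in> MQ" "fst x \<in> defined_preds PQ"
      moreover have "x \<notin> E" using Qdef[OF \<open>fst x \<in> defined_preds PQ\<close>] unfolding E_def by auto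
      ultimately show ?thesis using MQsub defQ by blast
    qed
    obtain p t where xpt: "x = (p,t)" by (cases x)
    have xM: "(p,t) \<in> M" using that xpt by simp
    show ?thesis
    proof (cases p)
      case (Qp q) then show ?thesis using xM xpt Mmem[of p t] * by auto
    next
      case (Ext P) then show ?thesis using xM xpt Mmem[of p t] D0wf by auto
    next
      case (Tr P) then show ?thesis using xM xpt Mmem[of p t] D'wf by auto
    next
      case (Fa P) then show ?thesis using xM xpt Mmem[of p t] D0wf by auto
    next
      case (St P) then show ?thesis using xM xpt Mmem[of p t] D0wf D'wf by auto
    next
      case (SS P) then show ?thesis using xM xpt Mmem[of p t] D'wf by auto
    qed
  qed
  have grM: "gr cs (cint S) (pint S) = M"
  proof (rule set_eqI)
    fix x :: "('r,'q) pn \<times> 'c list"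
    obtain p t where xpt: "x = (p,t)" by (cases x)
    show "x \<in> gr cs (cint S) (pint S) \<longleftrightarrow> x \<in> M"
      using Mwf[of x] xpt by (auto simp: gr_def S_def)
  qed
  have wfS: "wf_struct (pn_arity ar arq) cs bi S"
    unfolding wf_struct_def
  proof (intro conjI allI ballI impI)
    show "sdom S \<noteq> {}" using cs by (simp add: S_def)
  next
    fix c assume "c \<in> set cs" then show "cint S c \<in> sdom S" by (simp add: S_def)
  next
    fix p t assume "t \<in> pint S p"
    then have "(p,t) \<in> M" by (simp add: S_def)
    then show "length t = pn_arity ar arq p" "set t \<subseteq> sdom S" using Mwf[of "(p,t)"] by (auto simp: S_def)
  next
    fix b as show "bint S b (map (cint S) as) = bi b as" by (simp add: S_def)
  qed
  have dom: "sdom S = cint S ` set cs" by (simp add: S_def)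
  have bi: "\<forall>b as. set as \<subseteq> set cs \<longrightarrow> bint S b (map (cint S) as) = bi b as" by (simp add: S_def)
  have inj: "inj_on (cint S) (set cs)" by (simp add: S_def)
  have tup: "\<forall>p. \<forall>u\<in>pint S p. set u \<subseteq> sdom S"
  proof (intro allI ballI)
    fix p u assume "u \<in> pint S p"
    then have "(p,u)\<in>M" by (simp add: S_def)
    then show "set u \<subseteq> sdom S" using Mwf[of "(p,u)"] by (simp add: S_def)
  qed
  have ext: "\<forall>P\<in>set Sch. \<forall>t. (Ext P,t)\<in>M \<longleftrightarrow> (P,t)\<in>D0"
    using Mmem by simp
  have h1: "so_holds S (FO (RD Sch ar cs D))"
  proof -
    have ne: "sdom S \<noteq> {}" using cs by (simp add: S_def)
    have "\<forall>P\<in>set Sch. \<forall>u. length u = ar P \<longrightarrow> set u \<subseteq> sdom S \<longrightarrow>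
        (u \<in> pint S (Ext P) \<longleftrightarrow> (\<exists>t. (P,t) \<in> set D \<and> u = map (cint S) t))"
      using ext unfolding D0_def by (simp add: S_def)
    then show ?thesis using holds_RD[OF ne wfdb] dom inj by simp
  qed
  have can: "\<forall>P\<in>set Sch. \<forall>t. ((Tr P,t)\<in>M \<longleftrightarrow> (P,t)\<in>D' \<and> (P,t)\<notin>D0) \<and>
        ((Fa P,t)\<in>M \<longleftrightarrow> (P,t)\<in>D0 \<and> (P,t)\<notin>D') \<and>
        ((St P,t)\<in>M \<longleftrightarrow> (P,t)\<in>D0 \<or> (P,t)\<in>D') \<and> ((SS P,t)\<in>M \<longleftrightarrow> (P,t)\<in>D')"
    using Mmem by simp
  have h2: "so_holds S (SOMin (repair_preds Sch) (psi (repair_prog Sch ar ics)))"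
  proof -
    have r': "is_repair Sch ar cs bi ics D0 D'" using rep by (simp add: D0_def)
    have "so_min cs bi (repair_prog Sch ar ics) (repair_preds Sch) M"
      by (rule rep2[OF cs D0wf icwf ext r' can])
    then show ?thesis unfolding so_holds_SOMin[OF dom bi rp_consts[OF icwf] inj tup] grM .
  qed
  have h3: "so_holds S (SOMin (defined_preds PQ) (psi PQ))"
  proof -
    have D'S: "\<forall>(P,t)\<in>D'. P \<in> set Sch" using D'wf by blast
    have MSS: "\<forall>P\<in>set Sch. \<forall>t. (SS P,t)\<in>M \<longleftrightarrow> (P,t)\<in>D'" using can by blast
    have Mdef: "\<forall>x. fst x \<in> defined_preds PQ \<longrightarrow> (x \<in> M \<longleftrightarrow> x \<in> MQ)"
    proof (intro allI impI)
      fix x :: "('r,'q) pn \<times> 'c list" assume xd: "fst x \<in> defined_preds PQ"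
      then obtain q where "fst x = Qp q" using Qdef by blast
      then show "x \<in> M \<longleftrightarrow> x \<in> MQ" using Mmem[of "fst x" "snd x"] xd by (cases x) simp
    qed
    show ?thesis
      unfolding so_holds_SOMin[OF dom bi pq_consts[OF qp] inj tup] grM
      using q2[OF qp D'S stab MSS Mdef] .
  qed
  have "so_holds S (FO (FAtom (Qp ans) (map Cn a)))"
  proof -
    have "\<forall>g\<in>{FO (RD Sch ar cs D), SOMin (repair_preds Sch) (psi (repair_prog Sch ar ics)),
            SOMin (defined_preds PQ) (psi PQ)}. so_holds S g" (is ?G) using h1 h2 h3 by simp
    have "wf_struct (pn_arity ar arq) cs bi S \<longrightarrow> ?G \<longrightarrow> so_holds S (FO (FAtom (Qp ans) (map Cn a)))"
      using se unfolding so_entails_def by (rule spec)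
    then show ?thesis using wfS \<open>?G\<close> by (rule mp[OF mp])
  qed
  then have "holds_with S (\<lambda>_. {}) (FAtom (Qp ans) (map Cn a))" by simp
  moreover have "range (\<lambda>_::nat. hd cs) \<subseteq> sdom S" using cs by (simp add: S_def)
  ultimately have "eval S (\<lambda>_. {}) (\<lambda>_. hd cs) (FAtom (Qp ans) (map Cn a))"
  proof -
    assume H: "holds_with S (\<lambda>_. {}) (FAtom (Qp ans) (map Cn a))" and R: "range (\<lambda>_::nat. hd cs) \<subseteq> sdom S"
    have "\<forall>\<sigma>. range \<sigma> \<subseteq> sdom S \<longrightarrow> eval S (\<lambda>_. {}) \<sigma> (FAtom (Qp ans) (map Cn a))"
      using H unfolding holds_with_def .
    then show ?thesis using R by (elim allE impE)
  qed
  then have "map (tev (cint S) (\<lambda>_. hd cs)) (map Cn a) \<in> pint S (Qp ans)" by simp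
  then have "(Qp ans, a) \<in> M" by (simp add: S_def comp_def)
  then show "(Qp ans, a) \<in> MQ" using Mmem by simp
qed


theorem proposition3:
  fixes Sch :: "'r list" and ar :: "'r \<Rightarrow> nat" and arq :: "'q \<Rightarrow> nat"
    and cs :: "'c list" and bi :: "'b \<Rightarrow> 'c list \<Rightarrow> bool"
    and ics :: "('r,'c,'b) ic list" and D :: "('r \<times> 'c list) list"
    and PQ :: "(('r,'q) pn,'c,'b) rule list" and ans :: 'q and a :: "'c list"
  assumes "cs \<noteq> []"
    and "wf_db Sch ar cs D"
    and "\<forall>ic\<in>set ics. wf_ic Sch ar cs ic"
    and "query_program Sch ar arq cs ans PQ"
    and "set a \<subseteq> set cs"
  shows "cons_answer Sch ar cs bi ics D PQ ans a \<longleftrightarrow>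
         so_entails (pn_arity ar arq) cs bi
           {FO (RD Sch ar cs D),
            SOMin (repair_preds Sch) (psi (repair_prog Sch ar ics)),
            SOMin (defined_preds PQ) (psi PQ)}
           (FAtom (Qp ans) (map Cn a))"
  using dir1[OF assms] dir2[OF assms] by blast

end
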